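(* Let $d\ge2$ and let $O_+$ be the operator on $(\mathbb{C}^d)^{\otimes3}$ given by $O_+=\sum_{\vec a\in\mathbb{Z}_d^3}O_+(\vec a)|\vec a\rangle\langle\vec a|$ with $O_+(\vec a)=1+(-d)^{wt(\vec a)-1}$. Define $Q_3=O_+^2$; $Q_4=\sum_{\vec a\in\mathbb{Z}_d^4}O_+(a_1a_2a_3)O_+(a_1a_2a_4)|\vec a\rangle\langle\vec a|$; $Q_5=\sum_{\vec a\in\mathbb{Z}_d^5}O_+(a_1a_2a_3)O_+(a_1a_4a_5)|\vec a\rangle\langle\vec a|$; $Q_6=O_+\otimes O_+=\sum_{\vec a\in\mathbb{Z}_d^6}O_+(a_1a_2a_3)O_+(a_4a_5a_6)|\vec a\rangle\langle\vec a|$. Then for each $t\in\{3,4,5,6\}$ there exists $d_0$ such that for all $d\ge d_0$ and every conjugacy class $\xi$ of $S_t$, $\sum_{\pi\in\xi}\mathrm{Tr}[W_\pi Q_t]>0$.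
   Context: For a 3-dit string $\vec a=(a_1,a_2,a_3)$, $wt(\vec a)$ is the largest number of equal entries: $wt=1$ if all entries are distinct, $wt=2$ if exactly two coincide, $wt=3$ if all three coincide; so $O_+(\vec a)$ equals $2$, $1-d$, $1+d^2$ respectively. $O_+(a_ia_ja_k)$ means $O_+$ evaluated on the string $(a_i,a_j,a_k)$. $W_\pi$ ($\pi\in S_t$) is the permutation operator on $(\mathbb{C}^d)^{\otimes t}$ permuting tensor factors. *)

theory Defs
  imports Complex_Main "HOL-Library.FuncSet" "HOL-Combinatorics.Permutations"
begin

definition strings :: "nat \<Rightarrow> nat \<Rightarrow> (nat \<Rightarrow> nat) set" where
  "strings d t = PiE {0..<t} (\<lambda>_. {0..<d})"

definition wt3 :: "nat \<Rightarrow> nat \<Rightarrow> nat \<Rightarrow> nat" where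
  "wt3 x y z = (if x = y \<and> y = z then 3 else if x = y \<or> y = z \<or> x = z then 2 else 1)"

definition Oplus :: "nat \<Rightarrow> nat \<Rightarrow> nat \<Rightarrow> nat \<Rightarrow> real" where
  "Oplus d x y z = 1 + (- real d) ^ (wt3 x y z - 1)"

text \<open>Diagonal entries of Q_t (paper's a_1..a_t are a 0..a (t-1) here).\<close>
definition Qdiag :: "nat \<Rightarrow> nat \<Rightarrow> (nat \<Rightarrow> nat) \<Rightarrow> real" where
  "Qdiag d t a =
     (if t = 3 then (Oplus d (a 0) (a 1) (a 2))\<^sup>2
      else if t = 4 then Oplus d (a 0) (a 1) (a 2) * Oplus d (a 0) (a 1) (a 3)
      else if t = 5 then Oplus d (a 0) (a 1) (a 2) * Oplus d (a 0) (a 3) (a 4)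
      else if t = 6 then Oplus d (a 0) (a 1) (a 2) * Oplus d (a 3) (a 4) (a 5)
      else 0)"

definition Qmat :: "nat \<Rightarrow> nat \<Rightarrow> (nat \<Rightarrow> nat) \<Rightarrow> (nat \<Rightarrow> nat) \<Rightarrow> real" where
  "Qmat d t a b = (if a = b then Qdiag d t a else 0)"

text \<open>Matrix entries <a|W_pi|b> of the permutation operator: W_pi |b> = |a>
  where the i-th tensor factor of b is moved to position pi(i), i.e. a (pi i) = b i.\<close>
definition Wmat :: "nat \<Rightarrow> (nat \<Rightarrow> nat) \<Rightarrow> (nat \<Rightarrow> nat) \<Rightarrow> (nat \<Rightarrow> nat) \<Rightarrow> real" where
  "Wmat t \<pi> a b = (if \<forall>i<t. a (\<pi> i) = b i then 1 else 0)"

definition trWQ :: "nat \<Rightarrow> nat \<Rightarrow> (nat \<Rightarrow> nat) \<Rightarrow> real" where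
  "trWQ d t \<pi> = (\<Sum>a\<in>strings d t. \<Sum>b\<in>strings d t. Wmat t \<pi> a b * Qmat d t b a)"

definition conj_class :: "nat \<Rightarrow> (nat \<Rightarrow> nat) set \<Rightarrow> bool" where
  "conj_class t \<xi> \<longleftrightarrow> (\<exists>\<pi>. \<pi> permutes {0..<t} \<and>
      \<xi> = {\<sigma> \<circ> \<pi> \<circ> inv \<sigma> | \<sigma>. \<sigma> permutes {0..<t}})"

end

theory Submission
  imports Defs "HOL-Combinatorics.Multiset_Permutations"
begin

section \<open>Polynomials as integer coefficient lists\<close>

fun padd :: "int list \<Rightarrow> int list \<Rightarrow> int list" where
  "padd [] q = q" | "padd p [] = p" | "padd (a#p) (b#q) = (a+b) # padd p q"

definition psc :: "int \<Rightarrow> int list \<Rightarrow> int list" where "psc c p = map ((*) c) p"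

fun pmul :: "int list \<Rightarrow> int list \<Rightarrow> int list" where
  "pmul [] q = []" | "pmul (a#p) q = padd (psc a q) (0 # pmul p q)"

fun peval :: "int list \<Rightarrow> real \<Rightarrow> real" where
  "peval [] x = 0" | "peval (a#p) x = of_int a + x * peval p x"

fun upto_l :: "nat \<Rightarrow> nat list" where
  "upto_l 0 = []" | "upto_l (Suc n) = upto_l n @ [n]"

definition Op :: "nat \<Rightarrow> nat \<Rightarrow> nat \<Rightarrow> int list" where
  "Op x y z = (if x = y \<and> y = z then [1,0,1] else if x = y \<or> y = z \<or> x = z then [1,-1] else [2])"

definition Qp :: "nat \<Rightarrow> nat list \<Rightarrow> int list" where
  "Qp t a = (if t = 3 then pmul (Op (a!0) (a!1) (a!2)) (Op (a!0) (a!1) (a!2))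
   else if t = 4 then pmul (Op (a!0) (a!1) (a!2)) (Op (a!0) (a!1) (a!3))
   else if t = 5 then pmul (Op (a!0) (a!1) (a!2)) (Op (a!0) (a!3) (a!4))
   else if t = 6 then pmul (Op (a!0) (a!1) (a!2)) (Op (a!3) (a!4) (a!5))
   else [])"

definition Fp :: "nat \<Rightarrow> nat list \<Rightarrow> nat list \<Rightarrow> int list" where
  "Fp t p xs = (if length xs = t \<and> list_all (\<lambda>i. xs!(p!i) = xs!i) (upto_l t) then Qp t xs else [])"

definition dead :: "nat \<Rightarrow> nat list \<Rightarrow> nat list \<Rightarrow> bool" where
  "dead t p ys = (\<not> list_all (\<lambda>i. p!i < length ys \<longrightarrow> i < length ys \<longrightarrow> ys!(p!i) = ys!i) (upto_l t))"

fun Gp :: "(nat list \<Rightarrow> int list) \<Rightarrow> (nat list \<Rightarrow> bool) \<Rightarrow> nat \<Rightarrow> nat list \<Rightarrow> int list"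
and Sp :: "(nat list \<Rightarrow> int list) \<Rightarrow> (nat list \<Rightarrow> bool) \<Rightarrow> nat \<Rightarrow> nat list \<Rightarrow> nat list \<Rightarrow> int list" where
  "Gp F Dd 0 ys = (if Dd ys then [] else F ys)"
| "Gp F Dd (Suc n) ys = (if Dd ys then [] else padd (Sp F Dd n ys (remdups ys))
     (pmul [- int (length (remdups ys)), 1] (Gp F Dd n (ys @ [Suc (sum_list ys)]))))"
| "Sp F Dd n ys [] = []"
| "Sp F Dd n ys (v#vs) = padd (Gp F Dd n (ys@[v])) (Sp F Dd n ys vs)"

definition strip :: "int list \<Rightarrow> int list" where
  "strip p = rev (dropWhile (\<lambda>x. x = 0) (rev p))"

definition poscert :: "int list \<Rightarrow> bool" where
  "poscert p = (let q = strip p in q \<noteq> [] \<and> last q > 0 \<and> sum_list (map abs (butlast q)) < 100 * last q)"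

definition reps3 :: "nat list list" where
 "reps3 = [[0,1,2], [0,2,1], [1,2,0]]"

definition cert3_0 :: "(nat list \<times> nat list \<times> nat list) list" where
 "cert3_0 = [([0,1,2],[0,1,2],[0,1,2]), ([0,2,1],[0,1,2],[0,2,1]), ([1,0,2],[2,0,1],[0,2,1]), ([1,2,0],[0,1,2],[1,2,0]), ([2,0,1],[0,2,1],[1,2,0]), ([2,1,0],[1,0,2],[0,2,1])]"

definition cert3 :: "(nat list \<times> nat list \<times> nat list) list" where
 "cert3 = cert3_0"

definition reps4 :: "nat list list" where
 "reps4 = [[0,1,2,3], [0,1,3,2], [0,2,1,3], [0,2,3,1], [1,0,2,3], [1,0,3,2], [1,2,0,3], [1,2,3,0], [2,3,0,1], [2,3,1,0]]"

definition cert4_0 :: "(nat list \<times> nat list \<times> nat list) list" where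
 "cert4_0 = [([0,1,2,3],[0,1,2,3],[0,1,2,3]), ([0,1,3,2],[0,1,2,3],[0,1,3,2]), ([0,2,1,3],[0,1,2,3],[0,2,1,3]), ([0,2,3,1],[0,1,2,3],[0,2,3,1]), ([0,3,1,2],[0,1,3,2],[0,2,3,1]), ([0,3,2,1],[0,1,3,2],[0,2,1,3]), ([1,0,2,3],[0,1,2,3],[1,0,2,3]), ([1,0,3,2],[0,1,2,3],[1,0,3,2]), ([1,2,0,3],[0,1,2,3],[1,2,0,3]), ([1,2,3,0],[0,1,2,3],[1,2,3,0]), ([1,3,0,2],[0,1,3,2],[1,2,3,0]), ([1,3,2,0],[0,1,3,2],[1,2,0,3]), ([2,0,1,3],[1,0,2,3],[1,2,0,3]), ([2,0,3,1],[1,0,2,3],[1,2,3,0]), ([2,1,0,3],[1,0,2,3],[0,2,1,3]), ([2,1,3,0],[1,0,2,3],[0,2,3,1]), ([2,3,0,1],[0,1,2,3],[2,3,0,1]), ([2,3,1,0],[0,1,2,3],[2,3,1,0]), ([3,0,1,2],[1,0,3,2],[1,2,3,0]), ([3,0,2,1],[1,0,3,2],[1,2,0,3]), ([3,1,0,2],[1,0,3,2],[0,2,3,1]), ([3,1,2,0],[1,0,3,2],[0,2,1,3]), ([3,2,0,1],[0,1,3,2],[2,3,1,0]), ([3,2,1,0],[0,1,3,2],[2,3,0,1])]"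

definition cert4 :: "(nat list \<times> nat list \<times> nat list) list" where
 "cert4 = cert4_0"

definition reps5 :: "nat list list" where
 "reps5 = [[0,1,2,3,4], [0,1,2,4,3], [0,1,3,2,4], [0,1,3,4,2], [0,2,1,4,3], [0,2,3,4,1], [0,3,4,1,2], [0,3,4,2,1], [1,0,2,3,4], [1,0,2,4,3], [1,0,3,2,4], [1,0,3,4,2], [1,2,0,3,4], [1,2,0,4,3], [1,2,3,0,4], [1,2,3,4,0], [1,3,0,2,4], [1,3,0,4,2], [1,3,2,0,4], [1,3,2,4,0], [1,3,4,0,2], [1,3,4,2,0]]"

definition cert5_0 :: "(nat list \<times> nat list \<times> nat list) list" where
 "cert5_0 = [([0,1,2,3,4],[0,1,2,3,4],[0,1,2,3,4]), ([0,1,2,4,3],[0,1,2,3,4],[0,1,2,4,3]), ([0,1,3,2,4],[0,1,2,3,4],[0,1,3,2,4]), ([0,1,3,4,2],[0,1,2,3,4],[0,1,3,4,2]), ([0,1,4,2,3],[0,1,2,4,3],[0,1,3,4,2]), ([0,1,4,3,2],[0,1,2,4,3],[0,1,3,2,4]), ([0,2,1,3,4],[0,3,4,1,2],[0,1,2,4,3]), ([0,2,1,4,3],[0,1,2,3,4],[0,2,1,4,3]), ([0,2,3,1,4],[0,4,3,1,2],[0,1,3,4,2]), ([0,2,3,4,1],[0,1,2,3,4],[0,2,3,4,1]), ([0,2,4,1,3],[0,1,2,4,3],[0,2,3,4,1]), ([0,2,4,3,1],[0,3,4,1,2],[0,1,3,4,2]), ([0,3,1,2,4],[0,4,3,2,1],[0,1,3,4,2]),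 ([0,3,1,4,2],[0,2,1,3,4],[0,2,3,4,1]), ([0,3,2,1,4],[0,2,1,3,4],[0,1,3,2,4]), ([0,3,2,4,1],[0,2,1,3,4],[0,1,3,4,2]), ([0,3,4,1,2],[0,1,2,3,4],[0,3,4,1,2]), ([0,3,4,2,1],[0,1,2,3,4],[0,3,4,2,1]), ([0,4,1,2,3],[0,2,1,4,3],[0,2,3,4,1]), ([0,4,1,3,2],[0,3,4,2,1],[0,1,3,4,2]), ([0,4,2,1,3],[0,2,1,4,3],[0,1,3,4,2]), ([0,4,2,3,1],[0,2,1,4,3],[0,1,3,2,4]), ([0,4,3,1,2],[0,1,2,4,3],[0,3,4,2,1]), ([0,4,3,2,1],[0,1,2,4,3],[0,3,4,1,2]), ([1,0,2,3,4],[0,1,2,3,4],[1,0,2,3,4]), ([1,0,2,4,3],[0,1,2,3,4],[1,0,2,4,3]), ([1,0,3,2,4],[0,1,2,3,4],[1,0,3,2,4]), ([1,0,3,4,2],[0,1,2,3,4],[1,0,3,4,2]), ([1,0,4,2,3],[0,1,2,4,3],[1,0,3,4,2]), ([1,0,4,3,2],[0,1,2,4,3],[1,0,3,2,4]), ([1,2,0,3,4],[0,1,2,3,4],[1,2,0,3,4]), ([1,2,0,4,3],[0,1,2,3,4],[1,2,0,4,3]), ([1,2,3,0,4],[0,1,2,3,4],[1,2,3,0,4]), ([1,2,3,4,0],[0,1,2,3,4],[1,2,3,4,0]), ([1,2,4,0,3],[0,1,2,4,3],[1,2,3,4,0]), ([1,2,4,3,0],[0,1,2,4,3],[1,2,3,0,4]),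 ([1,3,0,2,4],[0,1,2,3,4],[1,3,0,2,4]), ([1,3,0,4,2],[0,1,2,3,4],[1,3,0,4,2]), ([1,3,2,0,4],[0,1,2,3,4],[1,3,2,0,4]), ([1,3,2,4,0],[0,1,2,3,4],[1,3,2,4,0])]"

definition cert5_1 :: "(nat list \<times> nat list \<times> nat list) list" where
 "cert5_1 = [([1,3,4,0,2],[0,1,2,3,4],[1,3,4,0,2]), ([1,3,4,2,0],[0,1,2,3,4],[1,3,4,2,0]), ([1,4,0,2,3],[0,1,2,4,3],[1,3,0,4,2]), ([1,4,0,3,2],[0,1,2,4,3],[1,3,0,2,4]), ([1,4,2,0,3],[0,1,2,4,3],[1,3,2,4,0]), ([1,4,2,3,0],[0,1,2,4,3],[1,3,2,0,4]), ([1,4,3,0,2],[0,1,2,4,3],[1,3,4,2,0]), ([1,4,3,2,0],[0,1,2,4,3],[1,3,4,0,2]), ([2,0,1,3,4],[0,2,1,3,4],[1,2,0,3,4]), ([2,0,1,4,3],[0,2,1,3,4],[1,2,0,4,3]), ([2,0,3,1,4],[0,2,1,3,4],[1,3,0,2,4]), ([2,0,3,4,1],[0,2,1,3,4],[1,3,0,4,2]), ([2,0,4,1,3],[0,2,1,4,3],[1,3,0,4,2]), ([2,0,4,3,1],[0,2,1,4,3],[1,3,0,2,4]), ([2,1,0,3,4],[0,2,1,3,4],[1,0,2,3,4]), ([2,1,0,4,3],[0,2,1,3,4],[1,0,2,4,3]), ([2,1,3,0,4],[0,2,1,3,4],[1,3,2,0,4]), ([2,1,3,4,0],[0,2,1,3,4],[1,3,2,4,0]),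 ([2,1,4,0,3],[0,2,1,4,3],[1,3,2,4,0]), ([2,1,4,3,0],[0,2,1,4,3],[1,3,2,0,4]), ([2,3,0,1,4],[0,2,1,3,4],[1,0,3,2,4]), ([2,3,0,4,1],[0,2,1,3,4],[1,0,3,4,2]), ([2,3,1,0,4],[0,2,1,3,4],[1,2,3,0,4]), ([2,3,1,4,0],[0,2,1,3,4],[1,2,3,4,0]), ([2,3,4,0,1],[0,2,1,4,3],[1,3,4,2,0]), ([2,3,4,1,0],[0,2,1,4,3],[1,3,4,0,2]), ([2,4,0,1,3],[0,2,1,4,3],[1,0,3,4,2]), ([2,4,0,3,1],[0,2,1,4,3],[1,0,3,2,4]), ([2,4,1,0,3],[0,2,1,4,3],[1,2,3,4,0]), ([2,4,1,3,0],[0,2,1,4,3],[1,2,3,0,4]), ([2,4,3,0,1],[0,2,1,3,4],[1,3,4,0,2]), ([2,4,3,1,0],[0,2,1,3,4],[1,3,4,2,0]), ([3,0,1,2,4],[0,3,4,2,1],[1,3,2,4,0]), ([3,0,1,4,2],[0,3,4,2,1],[1,2,3,4,0]), ([3,0,2,1,4],[0,3,4,1,2],[1,3,2,0,4]), ([3,0,2,4,1],[0,3,4,1,2],[1,2,3,0,4]), ([3,0,4,1,2],[0,3,4,1,2],[1,3,4,0,2]), ([3,0,4,2,1],[0,3,4,2,1],[1,3,4,2,0]), ([3,1,0,2,4],[0,3,4,2,1],[1,3,2,0,4]), ([3,1,0,4,2],[0,3,4,2,1],[1,2,3,0,4])]"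

definition cert5_2 :: "(nat list \<times> nat list \<times> nat list) list" where
 "cert5_2 = [([3,1,2,0,4],[0,3,4,1,2],[1,0,2,3,4]), ([3,1,2,4,0],[0,3,4,1,2],[1,2,0,3,4]), ([3,1,4,0,2],[0,3,4,2,1],[1,0,3,2,4]), ([3,1,4,2,0],[0,3,4,2,1],[1,3,0,2,4]), ([3,2,0,1,4],[0,3,4,1,2],[1,3,2,4,0]), ([3,2,0,4,1],[0,3,4,1,2],[1,2,3,4,0]), ([3,2,1,0,4],[0,3,4,1,2],[1,0,2,4,3]), ([3,2,1,4,0],[0,3,4,1,2],[1,2,0,4,3]), ([3,2,4,0,1],[0,3,4,1,2],[1,0,3,4,2]), ([3,2,4,1,0],[0,3,4,1,2],[1,3,0,4,2]), ([3,4,0,1,2],[0,3,4,1,2],[1,3,4,2,0]), ([3,4,0,2,1],[0,3,4,2,1],[1,3,4,0,2]), ([3,4,1,0,2],[0,3,4,2,1],[1,0,3,4,2]), ([3,4,1,2,0],[0,3,4,2,1],[1,3,0,4,2]), ([3,4,2,0,1],[0,3,4,1,2],[1,0,3,2,4]), ([3,4,2,1,0],[0,3,4,1,2],[1,3,0,2,4]), ([4,0,1,2,3],[0,4,3,2,1],[1,2,3,4,0]), ([4,0,1,3,2],[0,4,3,2,1],[1,3,2,4,0]), ([4,0,2,1,3],[0,4,3,1,2],[1,2,3,0,4]), ([4,0,2,3,1],[0,4,3,1,2],[1,3,2,0,4]), ([4,0,3,1,2],[0,4,3,2,1],[1,3,4,2,0]), ([4,0,3,2,1],[0,4,3,1,2],[1,3,4,0,2]),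 ([4,1,0,2,3],[0,4,3,2,1],[1,2,3,0,4]), ([4,1,0,3,2],[0,4,3,2,1],[1,3,2,0,4]), ([4,1,2,0,3],[0,4,3,1,2],[1,2,0,3,4]), ([4,1,2,3,0],[0,4,3,1,2],[1,0,2,3,4]), ([4,1,3,0,2],[0,4,3,2,1],[1,3,0,2,4]), ([4,1,3,2,0],[0,4,3,2,1],[1,0,3,2,4]), ([4,2,0,1,3],[0,4,3,1,2],[1,2,3,4,0]), ([4,2,0,3,1],[0,4,3,1,2],[1,3,2,4,0]), ([4,2,1,0,3],[0,4,3,1,2],[1,2,0,4,3]), ([4,2,1,3,0],[0,4,3,1,2],[1,0,2,4,3]), ([4,2,3,0,1],[0,4,3,1,2],[1,3,0,4,2]), ([4,2,3,1,0],[0,4,3,1,2],[1,0,3,4,2]), ([4,3,0,1,2],[0,4,3,2,1],[1,3,4,0,2]), ([4,3,0,2,1],[0,4,3,1,2],[1,3,4,2,0]), ([4,3,1,0,2],[0,4,3,2,1],[1,3,0,4,2]), ([4,3,1,2,0],[0,4,3,2,1],[1,0,3,4,2]), ([4,3,2,0,1],[0,4,3,1,2],[1,3,0,2,4]), ([4,3,2,1,0],[0,4,3,1,2],[1,0,3,2,4])]"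

definition cert5 :: "(nat list \<times> nat list \<times> nat list) list" where
 "cert5 = cert5_0 @ cert5_1 @ cert5_2"

definition reps6 :: "nat list list" where
 "reps6 = [[0,1,2,3,4,5], [0,1,2,3,5,4], [0,1,2,4,5,3], [0,1,3,2,4,5], [0,1,3,2,5,4], [0,1,3,4,2,5], [0,1,3,4,5,2], [0,2,1,3,5,4], [0,2,1,4,5,3], [0,2,3,1,5,4], [0,2,3,4,1,5], [0,2,3,4,5,1], [0,3,4,1,2,5], [0,3,4,1,5,2], [0,3,4,2,1,5], [0,3,4,2,5,1], [1,0,3,2,5,4], [1,0,3,4,5,2], [1,2,0,4,5,3], [1,2,3,4,5,0], [1,3,4,0,5,2], [1,3,4,2,5,0], [1,3,4,5,2,0], [3,4,5,0,1,2], [3,4,5,0,2,1], [3,4,5,1,2,0]]"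

definition cert6_0 :: "(nat list \<times> nat list \<times> nat list) list" where
 "cert6_0 = [([0,1,2,3,4,5],[0,1,2,3,4,5],[0,1,2,3,4,5]), ([0,1,2,3,5,4],[0,1,2,3,4,5],[0,1,2,3,5,4]), ([0,1,2,4,3,5],[0,1,2,5,3,4],[0,1,2,3,5,4]), ([0,1,2,4,5,3],[0,1,2,3,4,5],[0,1,2,4,5,3]), ([0,1,2,5,3,4],[0,1,2,3,5,4],[0,1,2,4,5,3]), ([0,1,2,5,4,3],[0,1,2,4,3,5],[0,1,2,3,5,4]), ([0,1,3,2,4,5],[0,1,2,3,4,5],[0,1,3,2,4,5]), ([0,1,3,2,5,4],[0,1,2,3,4,5],[0,1,3,2,5,4]), ([0,1,3,4,2,5],[0,1,2,3,4,5],[0,1,3,4,2,5]), ([0,1,3,4,5,2],[0,1,2,3,4,5],[0,1,3,4,5,2]), ([0,1,3,5,2,4],[0,1,2,3,5,4],[0,1,3,4,5,2]), ([0,1,3,5,4,2],[0,1,2,3,5,4],[0,1,3,4,2,5]), ([0,1,4,2,3,5],[0,1,2,4,3,5],[0,1,3,4,2,5]), ([0,1,4,2,5,3],[0,1,2,4,5,3],[0,1,3,4,5,2]), ([0,1,4,3,2,5],[0,1,2,4,3,5],[0,1,3,2,4,5]), ([0,1,4,3,5,2],[0,1,2,4,5,3],[0,1,3,4,2,5]), ([0,1,4,5,2,3],[0,1,2,4,3,5],[0,1,3,2,5,4]), ([0,1,4,5,3,2],[0,1,2,4,3,5],[0,1,3,4,5,2]), ([0,1,5,2,3,4],[0,1,2,5,4,3],[0,1,3,4,5,2]),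 ([0,1,5,2,4,3],[0,1,2,5,3,4],[0,1,3,4,2,5]), ([0,1,5,3,2,4],[0,1,2,5,4,3],[0,1,3,4,2,5]), ([0,1,5,3,4,2],[0,1,2,5,3,4],[0,1,3,2,4,5]), ([0,1,5,4,2,3],[0,1,2,5,3,4],[0,1,3,4,5,2]), ([0,1,5,4,3,2],[0,1,2,5,3,4],[0,1,3,2,5,4]), ([0,2,1,3,4,5],[3,4,5,0,1,2],[0,1,2,3,5,4]), ([0,2,1,3,5,4],[0,1,2,3,4,5],[0,2,1,3,5,4]), ([0,2,1,4,3,5],[0,1,2,5,3,4],[0,2,1,3,5,4]), ([0,2,1,4,5,3],[0,1,2,3,4,5],[0,2,1,4,5,3]), ([0,2,1,5,3,4],[0,1,2,3,5,4],[0,2,1,4,5,3]), ([0,2,1,5,4,3],[0,1,2,4,3,5],[0,2,1,3,5,4]), ([0,2,3,1,4,5],[4,5,3,1,2,0],[0,1,3,4,2,5]), ([0,2,3,1,5,4],[0,1,2,3,4,5],[0,2,3,1,5,4]), ([0,2,3,4,1,5],[0,1,2,3,4,5],[0,2,3,4,1,5]), ([0,2,3,4,5,1],[0,1,2,3,4,5],[0,2,3,4,5,1]), ([0,2,3,5,1,4],[0,1,2,3,5,4],[0,2,3,4,5,1]), ([0,2,3,5,4,1],[0,1,2,3,5,4],[0,2,3,4,1,5]), ([0,2,4,1,3,5],[0,1,2,4,3,5],[0,2,3,4,1,5]), ([0,2,4,1,5,3],[0,1,2,4,5,3],[0,2,3,4,5,1]), ([0,2,4,3,1,5],[3,5,4,1,2,0],[0,1,3,4,2,5]),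 ([0,2,4,3,5,1],[0,1,2,4,5,3],[0,2,3,4,1,5])]"

definition cert6_1 :: "(nat list \<times> nat list \<times> nat list) list" where
 "cert6_1 = [([0,2,4,5,1,3],[0,1,2,4,3,5],[0,2,3,1,5,4]), ([0,2,4,5,3,1],[0,1,2,4,3,5],[0,2,3,4,5,1]), ([0,2,5,1,3,4],[0,1,2,5,4,3],[0,2,3,4,5,1]), ([0,2,5,1,4,3],[0,1,2,5,3,4],[0,2,3,4,1,5]), ([0,2,5,3,1,4],[0,1,2,5,4,3],[0,2,3,4,1,5]), ([0,2,5,3,4,1],[3,4,5,1,2,0],[0,1,3,4,2,5]), ([0,2,5,4,1,3],[0,1,2,5,3,4],[0,2,3,4,5,1]), ([0,2,5,4,3,1],[0,1,2,5,3,4],[0,2,3,1,5,4]), ([0,3,1,2,4,5],[4,5,3,2,1,0],[0,1,3,4,2,5]), ([0,3,1,2,5,4],[0,2,1,3,4,5],[0,2,3,1,5,4]), ([0,3,1,4,2,5],[0,2,1,3,4,5],[0,2,3,4,1,5]), ([0,3,1,4,5,2],[0,2,1,3,4,5],[0,2,3,4,5,1]), ([0,3,1,5,2,4],[0,2,1,3,5,4],[0,2,3,4,5,1]), ([0,3,1,5,4,2],[0,2,1,3,5,4],[0,2,3,4,1,5]), ([0,3,2,1,4,5],[0,2,1,3,4,5],[0,1,3,2,4,5]), ([0,3,2,1,5,4],[0,2,1,3,4,5],[0,1,3,2,5,4]), ([0,3,2,4,1,5],[0,2,1,3,4,5],[0,1,3,4,2,5]), ([0,3,2,4,5,1],[0,2,1,3,4,5],[0,1,3,4,5,2]),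 ([0,3,2,5,1,4],[0,2,1,3,5,4],[0,1,3,4,5,2]), ([0,3,2,5,4,1],[0,2,1,3,5,4],[0,1,3,4,2,5]), ([0,3,4,1,2,5],[0,1,2,3,4,5],[0,3,4,1,2,5]), ([0,3,4,1,5,2],[0,1,2,3,4,5],[0,3,4,1,5,2]), ([0,3,4,2,1,5],[0,1,2,3,4,5],[0,3,4,2,1,5]), ([0,3,4,2,5,1],[0,1,2,3,4,5],[0,3,4,2,5,1]), ([0,3,4,5,1,2],[0,2,1,4,3,5],[0,3,4,2,5,1]), ([0,3,4,5,2,1],[0,2,1,4,3,5],[0,3,4,1,5,2]), ([0,3,5,1,2,4],[0,1,2,3,5,4],[0,3,4,1,5,2]), ([0,3,5,1,4,2],[0,1,2,3,5,4],[0,3,4,1,2,5]), ([0,3,5,2,1,4],[0,1,2,3,5,4],[0,3,4,2,5,1]), ([0,3,5,2,4,1],[0,1,2,3,5,4],[0,3,4,2,1,5]), ([0,3,5,4,1,2],[0,2,1,5,3,4],[0,3,4,1,5,2]), ([0,3,5,4,2,1],[0,2,1,5,3,4],[0,3,4,2,5,1]), ([0,4,1,2,3,5],[0,2,1,4,3,5],[0,2,3,4,1,5]), ([0,4,1,2,5,3],[0,2,1,4,5,3],[0,2,3,4,5,1]), ([0,4,1,3,2,5],[3,5,4,2,1,0],[0,1,3,4,2,5]), ([0,4,1,3,5,2],[0,2,1,4,5,3],[0,2,3,4,1,5]), ([0,4,1,5,2,3],[0,2,1,4,3,5],[0,2,3,1,5,4]), ([0,4,1,5,3,2],[0,2,1,4,3,5],[0,2,3,4,5,1]),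 ([0,4,2,1,3,5],[0,2,1,4,3,5],[0,1,3,4,2,5]), ([0,4,2,1,5,3],[0,2,1,4,5,3],[0,1,3,4,5,2])]"

definition cert6_2 :: "(nat list \<times> nat list \<times> nat list) list" where
 "cert6_2 = [([0,4,2,3,1,5],[0,2,1,4,3,5],[0,1,3,2,4,5]), ([0,4,2,3,5,1],[0,2,1,4,5,3],[0,1,3,4,2,5]), ([0,4,2,5,1,3],[0,2,1,4,3,5],[0,1,3,2,5,4]), ([0,4,2,5,3,1],[0,2,1,4,3,5],[0,1,3,4,5,2]), ([0,4,3,1,2,5],[0,1,2,4,3,5],[0,3,4,2,1,5]), ([0,4,3,1,5,2],[0,2,1,3,4,5],[0,3,4,2,5,1]), ([0,4,3,2,1,5],[0,1,2,4,3,5],[0,3,4,1,2,5]), ([0,4,3,2,5,1],[0,2,1,3,4,5],[0,3,4,1,5,2]), ([0,4,3,5,1,2],[0,1,2,4,3,5],[0,3,4,1,5,2]), ([0,4,3,5,2,1],[0,1,2,4,3,5],[0,3,4,2,5,1]), ([0,4,5,1,2,3],[0,1,2,4,5,3],[0,3,4,2,5,1]), ([0,4,5,1,3,2],[0,2,1,5,4,3],[0,3,4,1,5,2]), ([0,4,5,2,1,3],[0,1,2,4,5,3],[0,3,4,1,5,2]), ([0,4,5,2,3,1],[0,2,1,5,4,3],[0,3,4,2,5,1]), ([0,4,5,3,1,2],[0,1,2,4,5,3],[0,3,4,1,2,5]), ([0,4,5,3,2,1],[0,1,2,4,5,3],[0,3,4,2,1,5]), ([0,5,1,2,3,4],[0,2,1,5,4,3],[0,2,3,4,5,1]),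 ([0,5,1,2,4,3],[0,2,1,5,3,4],[0,2,3,4,1,5]), ([0,5,1,3,2,4],[0,2,1,5,4,3],[0,2,3,4,1,5]), ([0,5,1,3,4,2],[3,4,5,2,1,0],[0,1,3,4,2,5]), ([0,5,1,4,2,3],[0,2,1,5,3,4],[0,2,3,4,5,1]), ([0,5,1,4,3,2],[0,2,1,5,3,4],[0,2,3,1,5,4]), ([0,5,2,1,3,4],[0,2,1,5,4,3],[0,1,3,4,5,2]), ([0,5,2,1,4,3],[0,2,1,5,3,4],[0,1,3,4,2,5]), ([0,5,2,3,1,4],[0,2,1,5,4,3],[0,1,3,4,2,5]), ([0,5,2,3,4,1],[0,2,1,5,3,4],[0,1,3,2,4,5]), ([0,5,2,4,1,3],[0,2,1,5,3,4],[0,1,3,4,5,2]), ([0,5,2,4,3,1],[0,2,1,5,3,4],[0,1,3,2,5,4]), ([0,5,3,1,2,4],[0,2,1,3,5,4],[0,3,4,2,5,1]), ([0,5,3,1,4,2],[0,1,2,5,3,4],[0,3,4,2,1,5]), ([0,5,3,2,1,4],[0,2,1,3,5,4],[0,3,4,1,5,2]), ([0,5,3,2,4,1],[0,1,2,5,3,4],[0,3,4,1,2,5]), ([0,5,3,4,1,2],[0,1,2,5,3,4],[0,3,4,2,5,1]), ([0,5,3,4,2,1],[0,1,2,5,3,4],[0,3,4,1,5,2]), ([0,5,4,1,2,3],[0,2,1,4,5,3],[0,3,4,1,5,2]), ([0,5,4,1,3,2],[0,1,2,5,4,3],[0,3,4,2,5,1]), ([0,5,4,2,1,3],[0,2,1,4,5,3],[0,3,4,2,5,1]),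 ([0,5,4,2,3,1],[0,1,2,5,4,3],[0,3,4,1,5,2]), ([0,5,4,3,1,2],[0,1,2,5,4,3],[0,3,4,2,1,5]), ([0,5,4,3,2,1],[0,1,2,5,4,3],[0,3,4,1,2,5])]"

definition cert6_3 :: "(nat list \<times> nat list \<times> nat list) list" where
 "cert6_3 = [([1,0,2,3,4,5],[3,4,5,2,0,1],[0,1,2,3,5,4]), ([1,0,2,3,5,4],[2,0,1,3,4,5],[0,2,1,3,5,4]), ([1,0,2,4,3,5],[2,0,1,5,3,4],[0,2,1,3,5,4]), ([1,0,2,4,5,3],[2,0,1,3,4,5],[0,2,1,4,5,3]), ([1,0,2,5,3,4],[2,0,1,3,5,4],[0,2,1,4,5,3]), ([1,0,2,5,4,3],[2,0,1,4,3,5],[0,2,1,3,5,4]), ([1,0,3,2,4,5],[4,5,3,2,0,1],[0,1,3,2,5,4]), ([1,0,3,2,5,4],[0,1,2,3,4,5],[1,0,3,2,5,4]), ([1,0,3,4,2,5],[5,3,4,2,0,1],[0,2,3,1,5,4]), ([1,0,3,4,5,2],[0,1,2,3,4,5],[1,0,3,4,5,2]), ([1,0,3,5,2,4],[0,1,2,3,5,4],[1,0,3,4,5,2]), ([1,0,3,5,4,2],[4,3,5,2,0,1],[0,2,3,1,5,4]), ([1,0,4,2,3,5],[5,4,3,2,0,1],[0,2,3,1,5,4]), ([1,0,4,2,5,3],[0,1,2,4,5,3],[1,0,3,4,5,2]), ([1,0,4,3,2,5],[3,5,4,2,0,1],[0,1,3,2,5,4]), ([1,0,4,3,5,2],[3,4,5,2,0,1],[0,2,3,1,5,4]),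 ([1,0,4,5,2,3],[0,1,2,4,3,5],[1,0,3,2,5,4]), ([1,0,4,5,3,2],[0,1,2,4,3,5],[1,0,3,4,5,2]), ([1,0,5,2,3,4],[0,1,2,5,4,3],[1,0,3,4,5,2]), ([1,0,5,2,4,3],[4,5,3,2,0,1],[0,2,3,1,5,4]), ([1,0,5,3,2,4],[3,5,4,2,0,1],[0,2,3,1,5,4]), ([1,0,5,3,4,2],[3,4,5,2,0,1],[0,1,3,2,5,4]), ([1,0,5,4,2,3],[0,1,2,5,3,4],[1,0,3,4,5,2]), ([1,0,5,4,3,2],[0,1,2,5,3,4],[1,0,3,2,5,4]), ([1,2,0,3,4,5],[3,4,5,0,1,2],[0,1,2,4,5,3]), ([1,2,0,3,5,4],[3,4,5,0,1,2],[0,2,1,4,5,3]), ([1,2,0,4,3,5],[5,3,4,0,1,2],[0,2,1,4,5,3]), ([1,2,0,4,5,3],[0,1,2,3,4,5],[1,2,0,4,5,3]), ([1,2,0,5,3,4],[0,1,2,3,5,4],[1,2,0,4,5,3]), ([1,2,0,5,4,3],[4,3,5,0,1,2],[0,2,1,4,5,3]), ([1,2,3,0,4,5],[4,5,3,0,1,2],[0,1,3,4,5,2]), ([1,2,3,0,5,4],[4,5,3,0,1,2],[1,0,3,4,5,2]), ([1,2,3,4,0,5],[5,3,4,0,1,2],[0,2,3,4,5,1]), ([1,2,3,4,5,0],[0,1,2,3,4,5],[1,2,3,4,5,0]), ([1,2,3,5,0,4],[0,1,2,3,5,4],[1,2,3,4,5,0]), ([1,2,3,5,4,0],[4,3,5,0,1,2],[0,2,3,4,5,1]),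 ([1,2,4,0,3,5],[5,4,3,0,1,2],[0,2,3,4,5,1]), ([1,2,4,0,5,3],[0,1,2,4,5,3],[1,2,3,4,5,0]), ([1,2,4,3,0,5],[3,5,4,0,1,2],[0,1,3,4,5,2]), ([1,2,4,3,5,0],[3,4,5,0,1,2],[0,2,3,4,5,1])]"

definition cert6_4 :: "(nat list \<times> nat list \<times> nat list) list" where
 "cert6_4 = [([1,2,4,5,0,3],[3,5,4,0,1,2],[1,0,3,4,5,2]), ([1,2,4,5,3,0],[0,1,2,4,3,5],[1,2,3,4,5,0]), ([1,2,5,0,3,4],[0,1,2,5,4,3],[1,2,3,4,5,0]), ([1,2,5,0,4,3],[4,5,3,0,1,2],[0,2,3,4,5,1]), ([1,2,5,3,0,4],[3,5,4,0,1,2],[0,2,3,4,5,1]), ([1,2,5,3,4,0],[3,4,5,0,1,2],[0,1,3,4,5,2]), ([1,2,5,4,0,3],[0,1,2,5,3,4],[1,2,3,4,5,0]), ([1,2,5,4,3,0],[3,4,5,0,1,2],[1,0,3,4,5,2]), ([1,3,0,2,4,5],[4,5,3,2,0,1],[0,1,3,4,5,2]), ([1,3,0,2,5,4],[4,5,3,2,0,1],[1,0,3,4,5,2]), ([1,3,0,4,2,5],[5,3,4,2,0,1],[0,2,3,4,5,1]), ([1,3,0,4,5,2],[2,0,1,3,4,5],[1,2,3,4,5,0]), ([1,3,0,5,2,4],[2,0,1,3,5,4],[1,2,3,4,5,0]), ([1,3,0,5,4,2],[4,3,5,2,0,1],[0,2,3,4,5,1]), ([1,3,2,0,4,5],[4,5,3,0,1,2],[0,1,3,4,2,5]),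 ([1,3,2,0,5,4],[2,0,1,3,4,5],[0,2,3,1,5,4]), ([1,3,2,4,0,5],[2,0,1,3,4,5],[0,2,3,4,1,5]), ([1,3,2,4,5,0],[2,0,1,3,4,5],[0,2,3,4,5,1]), ([1,3,2,5,0,4],[2,0,1,3,5,4],[0,2,3,4,5,1]), ([1,3,2,5,4,0],[2,0,1,3,5,4],[0,2,3,4,1,5]), ([1,3,4,0,2,5],[5,4,3,2,0,1],[0,3,4,1,5,2]), ([1,3,4,0,5,2],[0,1,2,3,4,5],[1,3,4,0,5,2]), ([1,3,4,2,0,5],[5,3,4,2,0,1],[0,3,4,2,5,1]), ([1,3,4,2,5,0],[0,1,2,3,4,5],[1,3,4,2,5,0]), ([1,3,4,5,0,2],[3,5,4,2,0,1],[1,3,4,2,5,0]), ([1,3,4,5,2,0],[0,1,2,3,4,5],[1,3,4,5,2,0]), ([1,3,5,0,2,4],[0,1,2,3,5,4],[1,3,4,0,5,2]), ([1,3,5,0,4,2],[4,5,3,2,0,1],[0,3,4,1,5,2]), ([1,3,5,2,0,4],[0,1,2,3,5,4],[1,3,4,2,5,0]), ([1,3,5,2,4,0],[4,3,5,2,0,1],[0,3,4,2,5,1]), ([1,3,5,4,0,2],[0,1,2,3,5,4],[1,3,4,5,2,0]), ([1,3,5,4,2,0],[3,4,5,2,0,1],[1,3,4,2,5,0]), ([1,4,0,2,3,5],[5,4,3,2,0,1],[0,2,3,4,5,1]), ([1,4,0,2,5,3],[2,0,1,4,5,3],[1,2,3,4,5,0]), ([1,4,0,3,2,5],[3,5,4,2,0,1],[0,1,3,4,5,2]),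 ([1,4,0,3,5,2],[3,4,5,2,0,1],[0,2,3,4,5,1]), ([1,4,0,5,2,3],[3,5,4,2,0,1],[1,0,3,4,5,2]), ([1,4,0,5,3,2],[2,0,1,4,3,5],[1,2,3,4,5,0]), ([1,4,2,0,3,5],[2,0,1,4,3,5],[0,2,3,4,1,5]), ([1,4,2,0,5,3],[2,0,1,4,5,3],[0,2,3,4,5,1])]"

definition cert6_5 :: "(nat list \<times> nat list \<times> nat list) list" where
 "cert6_5 = [([1,4,2,3,0,5],[3,5,4,0,1,2],[0,1,3,4,2,5]), ([1,4,2,3,5,0],[2,0,1,4,5,3],[0,2,3,4,1,5]), ([1,4,2,5,0,3],[2,0,1,4,3,5],[0,2,3,1,5,4]), ([1,4,2,5,3,0],[2,0,1,4,3,5],[0,2,3,4,5,1]), ([1,4,3,0,2,5],[5,4,3,2,0,1],[0,3,4,2,5,1]), ([1,4,3,0,5,2],[4,5,3,2,0,1],[1,3,4,2,5,0]), ([1,4,3,2,0,5],[5,3,4,2,0,1],[0,3,4,1,5,2]), ([1,4,3,2,5,0],[0,1,2,4,3,5],[1,3,4,5,2,0]), ([1,4,3,5,0,2],[0,1,2,4,3,5],[1,3,4,0,5,2]), ([1,4,3,5,2,0],[0,1,2,4,3,5],[1,3,4,2,5,0]), ([1,4,5,0,2,3],[0,1,2,4,5,3],[1,3,4,2,5,0]), ([1,4,5,0,3,2],[0,1,2,4,5,3],[1,3,4,5,2,0]), ([1,4,5,2,0,3],[0,1,2,4,5,3],[1,3,4,0,5,2]), ([1,4,5,2,3,0],[4,3,5,2,0,1],[1,3,4,2,5,0]),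 ([1,4,5,3,0,2],[3,5,4,2,0,1],[0,3,4,1,5,2]), ([1,4,5,3,2,0],[3,4,5,2,0,1],[0,3,4,2,5,1]), ([1,5,0,2,3,4],[2,0,1,5,4,3],[1,2,3,4,5,0]), ([1,5,0,2,4,3],[4,5,3,2,0,1],[0,2,3,4,5,1]), ([1,5,0,3,2,4],[3,5,4,2,0,1],[0,2,3,4,5,1]), ([1,5,0,3,4,2],[3,4,5,2,0,1],[0,1,3,4,5,2]), ([1,5,0,4,2,3],[2,0,1,5,3,4],[1,2,3,4,5,0]), ([1,5,0,4,3,2],[3,4,5,2,0,1],[1,0,3,4,5,2]), ([1,5,2,0,3,4],[2,0,1,5,4,3],[0,2,3,4,5,1]), ([1,5,2,0,4,3],[2,0,1,5,3,4],[0,2,3,4,1,5]), ([1,5,2,3,0,4],[2,0,1,5,4,3],[0,2,3,4,1,5]), ([1,5,2,3,4,0],[3,4,5,0,1,2],[0,1,3,4,2,5]), ([1,5,2,4,0,3],[2,0,1,5,3,4],[0,2,3,4,5,1]), ([1,5,2,4,3,0],[2,0,1,5,3,4],[0,2,3,1,5,4]), ([1,5,3,0,2,4],[5,4,3,2,0,1],[1,3,4,2,5,0]), ([1,5,3,0,4,2],[4,5,3,2,0,1],[0,3,4,2,5,1]), ([1,5,3,2,0,4],[0,1,2,5,3,4],[1,3,4,5,2,0]), ([1,5,3,2,4,0],[4,3,5,2,0,1],[0,3,4,1,5,2]), ([1,5,3,4,0,2],[0,1,2,5,3,4],[1,3,4,2,5,0]), ([1,5,3,4,2,0],[0,1,2,5,3,4],[1,3,4,0,5,2]),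 ([1,5,4,0,2,3],[0,1,2,5,4,3],[1,3,4,5,2,0]), ([1,5,4,0,3,2],[0,1,2,5,4,3],[1,3,4,2,5,0]), ([1,5,4,2,0,3],[5,3,4,2,0,1],[1,3,4,2,5,0]), ([1,5,4,2,3,0],[0,1,2,5,4,3],[1,3,4,0,5,2]), ([1,5,4,3,0,2],[3,5,4,2,0,1],[0,3,4,2,5,1]), ([1,5,4,3,2,0],[3,4,5,2,0,1],[0,3,4,1,5,2])]"

definition cert6_6 :: "(nat list \<times> nat list \<times> nat list) list" where
 "cert6_6 = [([2,0,1,3,4,5],[3,4,5,0,2,1],[0,1,2,4,5,3]), ([2,0,1,3,5,4],[3,4,5,0,2,1],[0,2,1,4,5,3]), ([2,0,1,4,3,5],[5,3,4,0,2,1],[0,2,1,4,5,3]), ([2,0,1,4,5,3],[0,2,1,3,4,5],[1,2,0,4,5,3]), ([2,0,1,5,3,4],[0,2,1,3,5,4],[1,2,0,4,5,3]), ([2,0,1,5,4,3],[4,3,5,0,2,1],[0,2,1,4,5,3]), ([2,0,3,1,4,5],[4,5,3,1,0,2],[0,1,3,4,5,2]), ([2,0,3,1,5,4],[4,5,3,1,0,2],[1,0,3,4,5,2]), ([2,0,3,4,1,5],[5,3,4,1,0,2],[0,2,3,4,5,1]), ([2,0,3,4,5,1],[1,0,2,3,4,5],[1,2,3,4,5,0]), ([2,0,3,5,1,4],[1,0,2,3,5,4],[1,2,3,4,5,0]), ([2,0,3,5,4,1],[4,3,5,1,0,2],[0,2,3,4,5,1]), ([2,0,4,1,3,5],[5,4,3,1,0,2],[0,2,3,4,5,1]),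 ([2,0,4,1,5,3],[1,0,2,4,5,3],[1,2,3,4,5,0]), ([2,0,4,3,1,5],[3,5,4,1,0,2],[0,1,3,4,5,2]), ([2,0,4,3,5,1],[3,4,5,1,0,2],[0,2,3,4,5,1]), ([2,0,4,5,1,3],[3,5,4,1,0,2],[1,0,3,4,5,2]), ([2,0,4,5,3,1],[1,0,2,4,3,5],[1,2,3,4,5,0]), ([2,0,5,1,3,4],[1,0,2,5,4,3],[1,2,3,4,5,0]), ([2,0,5,1,4,3],[4,5,3,1,0,2],[0,2,3,4,5,1]), ([2,0,5,3,1,4],[3,5,4,1,0,2],[0,2,3,4,5,1]), ([2,0,5,3,4,1],[3,4,5,1,0,2],[0,1,3,4,5,2]), ([2,0,5,4,1,3],[1,0,2,5,3,4],[1,2,3,4,5,0]), ([2,0,5,4,3,1],[3,4,5,1,0,2],[1,0,3,4,5,2]), ([2,1,0,3,4,5],[3,4,5,1,0,2],[0,1,2,3,5,4]), ([2,1,0,3,5,4],[1,0,2,3,4,5],[0,2,1,3,5,4]), ([2,1,0,4,3,5],[1,0,2,5,3,4],[0,2,1,3,5,4]), ([2,1,0,4,5,3],[1,0,2,3,4,5],[0,2,1,4,5,3]), ([2,1,0,5,3,4],[1,0,2,3,5,4],[0,2,1,4,5,3]), ([2,1,0,5,4,3],[1,0,2,4,3,5],[0,2,1,3,5,4]), ([2,1,3,0,4,5],[4,5,3,0,2,1],[0,1,3,4,2,5]), ([2,1,3,0,5,4],[1,0,2,3,4,5],[0,2,3,1,5,4]), ([2,1,3,4,0,5],[1,0,2,3,4,5],[0,2,3,4,1,5]),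 ([2,1,3,4,5,0],[1,0,2,3,4,5],[0,2,3,4,5,1]), ([2,1,3,5,0,4],[1,0,2,3,5,4],[0,2,3,4,5,1]), ([2,1,3,5,4,0],[1,0,2,3,5,4],[0,2,3,4,1,5]), ([2,1,4,0,3,5],[1,0,2,4,3,5],[0,2,3,4,1,5]), ([2,1,4,0,5,3],[1,0,2,4,5,3],[0,2,3,4,5,1]), ([2,1,4,3,0,5],[3,5,4,0,2,1],[0,1,3,4,2,5]), ([2,1,4,3,5,0],[1,0,2,4,5,3],[0,2,3,4,1,5])]"

definition cert6_7 :: "(nat list \<times> nat list \<times> nat list) list" where
 "cert6_7 = [([2,1,4,5,0,3],[1,0,2,4,3,5],[0,2,3,1,5,4]), ([2,1,4,5,3,0],[1,0,2,4,3,5],[0,2,3,4,5,1]), ([2,1,5,0,3,4],[1,0,2,5,4,3],[0,2,3,4,5,1]), ([2,1,5,0,4,3],[1,0,2,5,3,4],[0,2,3,4,1,5]), ([2,1,5,3,0,4],[1,0,2,5,4,3],[0,2,3,4,1,5]), ([2,1,5,3,4,0],[3,4,5,0,2,1],[0,1,3,4,2,5]), ([2,1,5,4,0,3],[1,0,2,5,3,4],[0,2,3,4,5,1]), ([2,1,5,4,3,0],[1,0,2,5,3,4],[0,2,3,1,5,4]), ([2,3,0,1,4,5],[4,5,3,1,0,2],[0,1,3,2,5,4]), ([2,3,0,1,5,4],[0,2,1,3,4,5],[1,0,3,2,5,4]), ([2,3,0,4,1,5],[5,3,4,1,0,2],[0,2,3,1,5,4]), ([2,3,0,4,5,1],[0,2,1,3,4,5],[1,0,3,4,5,2]),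 ([2,3,0,5,1,4],[0,2,1,3,5,4],[1,0,3,4,5,2]), ([2,3,0,5,4,1],[4,3,5,1,0,2],[0,2,3,1,5,4]), ([2,3,1,0,4,5],[4,5,3,0,2,1],[0,1,3,4,5,2]), ([2,3,1,0,5,4],[4,5,3,0,2,1],[1,0,3,4,5,2]), ([2,3,1,4,0,5],[5,3,4,0,2,1],[0,2,3,4,5,1]), ([2,3,1,4,5,0],[0,2,1,3,4,5],[1,2,3,4,5,0]), ([2,3,1,5,0,4],[0,2,1,3,5,4],[1,2,3,4,5,0]), ([2,3,1,5,4,0],[4,3,5,0,2,1],[0,2,3,4,5,1]), ([2,3,4,0,1,5],[5,4,3,1,0,2],[0,3,4,2,5,1]), ([2,3,4,0,5,1],[4,5,3,1,0,2],[1,3,4,2,5,0]), ([2,3,4,1,0,5],[5,3,4,1,0,2],[0,3,4,1,5,2]), ([2,3,4,1,5,0],[0,2,1,4,3,5],[1,3,4,5,2,0]), ([2,3,4,5,0,1],[0,2,1,4,3,5],[1,3,4,0,5,2]), ([2,3,4,5,1,0],[0,2,1,4,3,5],[1,3,4,2,5,0]), ([2,3,5,0,1,4],[5,4,3,1,0,2],[1,3,4,2,5,0]), ([2,3,5,0,4,1],[4,5,3,1,0,2],[0,3,4,2,5,1]), ([2,3,5,1,0,4],[0,2,1,5,3,4],[1,3,4,5,2,0]), ([2,3,5,1,4,0],[4,3,5,1,0,2],[0,3,4,1,5,2]), ([2,3,5,4,0,1],[0,2,1,5,3,4],[1,3,4,2,5,0]), ([2,3,5,4,1,0],[0,2,1,5,3,4],[1,3,4,0,5,2]),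 ([2,4,0,1,3,5],[5,4,3,1,0,2],[0,2,3,1,5,4]), ([2,4,0,1,5,3],[0,2,1,4,5,3],[1,0,3,4,5,2]), ([2,4,0,3,1,5],[3,5,4,1,0,2],[0,1,3,2,5,4]), ([2,4,0,3,5,1],[3,4,5,1,0,2],[0,2,3,1,5,4]), ([2,4,0,5,1,3],[0,2,1,4,3,5],[1,0,3,2,5,4]), ([2,4,0,5,3,1],[0,2,1,4,3,5],[1,0,3,4,5,2]), ([2,4,1,0,3,5],[5,4,3,0,2,1],[0,2,3,4,5,1]), ([2,4,1,0,5,3],[0,2,1,4,5,3],[1,2,3,4,5,0])]"

definition cert6_8 :: "(nat list \<times> nat list \<times> nat list) list" where
 "cert6_8 = [([2,4,1,3,0,5],[3,5,4,0,2,1],[0,1,3,4,5,2]), ([2,4,1,3,5,0],[3,4,5,0,2,1],[0,2,3,4,5,1]), ([2,4,1,5,0,3],[3,5,4,0,2,1],[1,0,3,4,5,2]), ([2,4,1,5,3,0],[0,2,1,4,3,5],[1,2,3,4,5,0]), ([2,4,3,0,1,5],[5,4,3,1,0,2],[0,3,4,1,5,2]), ([2,4,3,0,5,1],[0,2,1,3,4,5],[1,3,4,0,5,2]), ([2,4,3,1,0,5],[5,3,4,1,0,2],[0,3,4,2,5,1]), ([2,4,3,1,5,0],[0,2,1,3,4,5],[1,3,4,2,5,0]), ([2,4,3,5,0,1],[3,5,4,1,0,2],[1,3,4,2,5,0]), ([2,4,3,5,1,0],[0,2,1,3,4,5],[1,3,4,5,2,0]), ([2,4,5,0,1,3],[0,2,1,5,4,3],[1,3,4,5,2,0]),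 ([2,4,5,0,3,1],[0,2,1,5,4,3],[1,3,4,2,5,0]), ([2,4,5,1,0,3],[5,3,4,1,0,2],[1,3,4,2,5,0]), ([2,4,5,1,3,0],[0,2,1,5,4,3],[1,3,4,0,5,2]), ([2,4,5,3,0,1],[3,5,4,1,0,2],[0,3,4,2,5,1]), ([2,4,5,3,1,0],[3,4,5,1,0,2],[0,3,4,1,5,2]), ([2,5,0,1,3,4],[0,2,1,5,4,3],[1,0,3,4,5,2]), ([2,5,0,1,4,3],[4,5,3,1,0,2],[0,2,3,1,5,4]), ([2,5,0,3,1,4],[3,5,4,1,0,2],[0,2,3,1,5,4]), ([2,5,0,3,4,1],[3,4,5,1,0,2],[0,1,3,2,5,4]), ([2,5,0,4,1,3],[0,2,1,5,3,4],[1,0,3,4,5,2]), ([2,5,0,4,3,1],[0,2,1,5,3,4],[1,0,3,2,5,4]), ([2,5,1,0,3,4],[0,2,1,5,4,3],[1,2,3,4,5,0]), ([2,5,1,0,4,3],[4,5,3,0,2,1],[0,2,3,4,5,1]), ([2,5,1,3,0,4],[3,5,4,0,2,1],[0,2,3,4,5,1]), ([2,5,1,3,4,0],[3,4,5,0,2,1],[0,1,3,4,5,2]), ([2,5,1,4,0,3],[0,2,1,5,3,4],[1,2,3,4,5,0]), ([2,5,1,4,3,0],[3,4,5,0,2,1],[1,0,3,4,5,2]), ([2,5,3,0,1,4],[0,2,1,3,5,4],[1,3,4,0,5,2]), ([2,5,3,0,4,1],[4,5,3,1,0,2],[0,3,4,1,5,2]), ([2,5,3,1,0,4],[0,2,1,3,5,4],[1,3,4,2,5,0]),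 ([2,5,3,1,4,0],[4,3,5,1,0,2],[0,3,4,2,5,1]), ([2,5,3,4,0,1],[0,2,1,3,5,4],[1,3,4,5,2,0]), ([2,5,3,4,1,0],[3,4,5,1,0,2],[1,3,4,2,5,0]), ([2,5,4,0,1,3],[0,2,1,4,5,3],[1,3,4,2,5,0]), ([2,5,4,0,3,1],[0,2,1,4,5,3],[1,3,4,5,2,0]), ([2,5,4,1,0,3],[0,2,1,4,5,3],[1,3,4,0,5,2]), ([2,5,4,1,3,0],[4,3,5,1,0,2],[1,3,4,2,5,0]), ([2,5,4,3,0,1],[3,5,4,1,0,2],[0,3,4,1,5,2]), ([2,5,4,3,1,0],[3,4,5,1,0,2],[0,3,4,2,5,1])]"

definition cert6_9 :: "(nat list \<times> nat list \<times> nat list) list" where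
 "cert6_9 = [([3,0,1,2,4,5],[4,5,3,2,1,0],[0,1,3,4,5,2]), ([3,0,1,2,5,4],[4,5,3,2,1,0],[1,0,3,4,5,2]), ([3,0,1,4,2,5],[5,3,4,2,1,0],[0,2,3,4,5,1]), ([3,0,1,4,5,2],[2,1,0,3,4,5],[1,2,3,4,5,0]), ([3,0,1,5,2,4],[2,1,0,3,5,4],[1,2,3,4,5,0]), ([3,0,1,5,4,2],[4,3,5,2,1,0],[0,2,3,4,5,1]), ([3,0,2,1,4,5],[4,5,3,1,0,2],[0,1,3,4,2,5]), ([3,0,2,1,5,4],[2,1,0,3,4,5],[0,2,3,1,5,4]), ([3,0,2,4,1,5],[2,1,0,3,4,5],[0,2,3,4,1,5]), ([3,0,2,4,5,1],[2,1,0,3,4,5],[0,2,3,4,5,1]), ([3,0,2,5,1,4],[2,1,0,3,5,4],[0,2,3,4,5,1]), ([3,0,2,5,4,1],[2,1,0,3,5,4],[0,2,3,4,1,5]), ([3,0,4,1,2,5],[5,4,3,2,1,0],[0,3,4,1,5,2]), ([3,0,4,1,5,2],[1,0,2,3,4,5],[1,3,4,0,5,2]), ([3,0,4,2,1,5],[5,3,4,2,1,0],[0,3,4,2,5,1]), ([3,0,4,2,5,1],[1,0,2,3,4,5],[1,3,4,2,5,0]), ([3,0,4,5,1,2],[3,5,4,2,1,0],[1,3,4,2,5,0]), ([3,0,4,5,2,1],[1,0,2,3,4,5],[1,3,4,5,2,0]), ([3,0,5,1,2,4],[1,0,2,3,5,4],[1,3,4,0,5,2]), ([3,0,5,1,4,2],[4,5,3,2,1,0],[0,3,4,1,5,2]),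 ([3,0,5,2,1,4],[1,0,2,3,5,4],[1,3,4,2,5,0]), ([3,0,5,2,4,1],[4,3,5,2,1,0],[0,3,4,2,5,1]), ([3,0,5,4,1,2],[1,0,2,3,5,4],[1,3,4,5,2,0]), ([3,0,5,4,2,1],[3,4,5,2,1,0],[1,3,4,2,5,0]), ([3,1,0,2,4,5],[4,5,3,2,0,1],[0,1,3,4,2,5]), ([3,1,0,2,5,4],[1,2,0,3,4,5],[0,2,3,1,5,4]), ([3,1,0,4,2,5],[1,2,0,3,4,5],[0,2,3,4,1,5]), ([3,1,0,4,5,2],[1,2,0,3,4,5],[0,2,3,4,5,1]), ([3,1,0,5,2,4],[1,2,0,3,5,4],[0,2,3,4,5,1]), ([3,1,0,5,4,2],[1,2,0,3,5,4],[0,2,3,4,1,5]), ([3,1,2,0,4,5],[1,2,0,3,4,5],[0,1,3,2,4,5]), ([3,1,2,0,5,4],[1,2,0,3,4,5],[0,1,3,2,5,4]), ([3,1,2,4,0,5],[1,2,0,3,4,5],[0,1,3,4,2,5]), ([3,1,2,4,5,0],[1,2,0,3,4,5],[0,1,3,4,5,2]), ([3,1,2,5,0,4],[1,2,0,3,5,4],[0,1,3,4,5,2]), ([3,1,2,5,4,0],[1,2,0,3,5,4],[0,1,3,4,2,5]), ([3,1,4,0,2,5],[1,0,2,3,4,5],[0,3,4,1,2,5]), ([3,1,4,0,5,2],[1,0,2,3,4,5],[0,3,4,1,5,2]), ([3,1,4,2,0,5],[1,0,2,3,4,5],[0,3,4,2,1,5]), ([3,1,4,2,5,0],[1,0,2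,3,4,5],[0,3,4,2,5,1])]"

definition cert6_10 :: "(nat list \<times> nat list \<times> nat list) list" where
 "cert6_10 = [([3,1,4,5,0,2],[1,2,0,4,3,5],[0,3,4,2,5,1]), ([3,1,4,5,2,0],[1,2,0,4,3,5],[0,3,4,1,5,2]), ([3,1,5,0,2,4],[1,0,2,3,5,4],[0,3,4,1,5,2]), ([3,1,5,0,4,2],[1,0,2,3,5,4],[0,3,4,1,2,5]), ([3,1,5,2,0,4],[1,0,2,3,5,4],[0,3,4,2,5,1]), ([3,1,5,2,4,0],[1,0,2,3,5,4],[0,3,4,2,1,5]), ([3,1,5,4,0,2],[1,2,0,5,3,4],[0,3,4,1,5,2]), ([3,1,5,4,2,0],[1,2,0,5,3,4],[0,3,4,2,5,1]), ([3,2,0,1,4,5],[4,5,3,1,2,0],[0,1,3,4,5,2]), ([3,2,0,1,5,4],[4,5,3,1,2,0],[1,0,3,4,5,2]), ([3,2,0,4,1,5],[5,3,4,1,2,0],[0,2,3,4,5,1]), ([3,2,0,4,5,1],[1,2,0,3,4,5],[1,2,3,4,5,0]), ([3,2,0,5,1,4],[1,2,0,3,5,4],[1,2,3,4,5,0]), ([3,2,0,5,4,1],[4,3,5,1,2,0],[0,2,3,4,5,1]), ([3,2,1,0,4,5],[4,5,3,0,1,2],[0,1,3,2,5,4]), ([3,2,1,0,5,4],[1,2,0,3,4,5],[1,0,3,2,5,4]), ([3,2,1,4,0,5],[5,3,4,0,1,2],[0,2,3,1,5,4]), ([3,2,1,4,5,0],[1,2,0,3,4,5],[1,0,3,4,5,2]),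 ([3,2,1,5,0,4],[1,2,0,3,5,4],[1,0,3,4,5,2]), ([3,2,1,5,4,0],[4,3,5,0,1,2],[0,2,3,1,5,4]), ([3,2,4,0,1,5],[5,3,4,0,1,2],[0,3,4,1,5,2]), ([3,2,4,0,5,1],[1,2,0,4,3,5],[1,3,4,5,2,0]), ([3,2,4,1,0,5],[5,4,3,0,1,2],[0,3,4,2,5,1]), ([3,2,4,1,5,0],[4,5,3,0,1,2],[1,3,4,2,5,0]), ([3,2,4,5,0,1],[1,2,0,4,3,5],[1,3,4,2,5,0]), ([3,2,4,5,1,0],[1,2,0,4,3,5],[1,3,4,0,5,2]), ([3,2,5,0,1,4],[1,2,0,5,3,4],[1,3,4,5,2,0]), ([3,2,5,0,4,1],[4,3,5,0,1,2],[0,3,4,1,5,2]), ([3,2,5,1,0,4],[5,4,3,0,1,2],[1,3,4,2,5,0]), ([3,2,5,1,4,0],[4,5,3,0,1,2],[0,3,4,2,5,1]), ([3,2,5,4,0,1],[1,2,0,5,3,4],[1,3,4,0,5,2]), ([3,2,5,4,1,0],[1,2,0,5,3,4],[1,3,4,2,5,0]), ([3,4,0,1,2,5],[5,3,4,1,2,0],[0,3,4,2,5,1]), ([3,4,0,1,5,2],[2,0,1,3,4,5],[1,3,4,2,5,0]), ([3,4,0,2,1,5],[5,4,3,1,2,0],[0,3,4,1,5,2]), ([3,4,0,2,5,1],[2,0,1,3,4,5],[1,3,4,0,5,2]), ([3,4,0,5,1,2],[2,0,1,3,4,5],[1,3,4,5,2,0]), ([3,4,0,5,2,1],[3,5,4,1,2,0],[1,3,4,2,5,0]),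 ([3,4,1,0,2,5],[5,3,4,0,2,1],[0,3,4,1,5,2]), ([3,4,1,0,5,2],[2,1,0,4,3,5],[1,3,4,5,2,0])]"

definition cert6_11 :: "(nat list \<times> nat list \<times> nat list) list" where
 "cert6_11 = [([3,4,1,2,0,5],[5,4,3,0,2,1],[0,3,4,2,5,1]), ([3,4,1,2,5,0],[4,5,3,0,2,1],[1,3,4,2,5,0]), ([3,4,1,5,0,2],[2,1,0,4,3,5],[1,3,4,2,5,0]), ([3,4,1,5,2,0],[2,1,0,4,3,5],[1,3,4,0,5,2]), ([3,4,2,0,1,5],[2,0,1,3,4,5],[0,3,4,1,2,5]), ([3,4,2,0,5,1],[2,0,1,3,4,5],[0,3,4,1,5,2]), ([3,4,2,1,0,5],[2,0,1,3,4,5],[0,3,4,2,1,5]), ([3,4,2,1,5,0],[2,0,1,3,4,5],[0,3,4,2,5,1]), ([3,4,2,5,0,1],[2,1,0,4,3,5],[0,3,4,2,5,1]), ([3,4,2,5,1,0],[2,1,0,4,3,5],[0,3,4,1,5,2]), ([3,4,5,0,1,2],[0,1,2,3,4,5],[3,4,5,0,1,2]), ([3,4,5,0,2,1],[0,1,2,3,4,5],[3,4,5,0,2,1]), ([3,4,5,1,0,2],[2,0,1,5,3,4],[3,4,5,0,2,1]), ([3,4,5,1,2,0],[0,1,2,3,4,5],[3,4,5,1,2,0]), ([3,4,5,2,0,1],[0,2,1,3,5,4],[3,4,5,1,2,0]), ([3,4,5,2,1,0],[1,0,2,4,3,5],[3,4,5,0,2,1]), ([3,5,0,1,2,4],[2,0,1,3,5,4],[1,3,4,2,5,0]),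 ([3,5,0,1,4,2],[4,3,5,1,2,0],[0,3,4,2,5,1]), ([3,5,0,2,1,4],[2,0,1,3,5,4],[1,3,4,0,5,2]), ([3,5,0,2,4,1],[4,5,3,1,2,0],[0,3,4,1,5,2]), ([3,5,0,4,1,2],[3,4,5,1,2,0],[1,3,4,2,5,0]), ([3,5,0,4,2,1],[2,0,1,3,5,4],[1,3,4,5,2,0]), ([3,5,1,0,2,4],[2,1,0,5,3,4],[1,3,4,5,2,0]), ([3,5,1,0,4,2],[4,3,5,0,2,1],[0,3,4,1,5,2]), ([3,5,1,2,0,4],[5,4,3,0,2,1],[1,3,4,2,5,0]), ([3,5,1,2,4,0],[4,5,3,0,2,1],[0,3,4,2,5,1]), ([3,5,1,4,0,2],[2,1,0,5,3,4],[1,3,4,0,5,2]), ([3,5,1,4,2,0],[2,1,0,5,3,4],[1,3,4,2,5,0]), ([3,5,2,0,1,4],[2,0,1,3,5,4],[0,3,4,1,5,2]), ([3,5,2,0,4,1],[2,0,1,3,5,4],[0,3,4,1,2,5]), ([3,5,2,1,0,4],[2,0,1,3,5,4],[0,3,4,2,5,1]), ([3,5,2,1,4,0],[2,0,1,3,5,4],[0,3,4,2,1,5]), ([3,5,2,4,0,1],[2,1,0,5,3,4],[0,3,4,1,5,2]), ([3,5,2,4,1,0],[2,1,0,5,3,4],[0,3,4,2,5,1]), ([3,5,4,0,1,2],[0,1,2,3,5,4],[3,4,5,0,2,1]), ([3,5,4,0,2,1],[0,1,2,3,5,4],[3,4,5,0,1,2]), ([3,5,4,1,0,2],[0,1,2,3,5,4],[3,4,5,1,2,0]),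 ([3,5,4,1,2,0],[2,0,1,4,3,5],[3,4,5,0,2,1]), ([3,5,4,2,0,1],[1,0,2,5,3,4],[3,4,5,0,2,1]), ([3,5,4,2,1,0],[0,2,1,3,4,5],[3,4,5,1,2,0])]"

definition cert6_12 :: "(nat list \<times> nat list \<times> nat list) list" where
 "cert6_12 = [([4,0,1,2,3,5],[5,4,3,2,1,0],[0,2,3,4,5,1]), ([4,0,1,2,5,3],[2,1,0,4,5,3],[1,2,3,4,5,0]), ([4,0,1,3,2,5],[3,5,4,2,1,0],[0,1,3,4,5,2]), ([4,0,1,3,5,2],[3,4,5,2,1,0],[0,2,3,4,5,1]), ([4,0,1,5,2,3],[3,5,4,2,1,0],[1,0,3,4,5,2]), ([4,0,1,5,3,2],[2,1,0,4,3,5],[1,2,3,4,5,0]), ([4,0,2,1,3,5],[2,1,0,4,3,5],[0,2,3,4,1,5]), ([4,0,2,1,5,3],[2,1,0,4,5,3],[0,2,3,4,5,1]), ([4,0,2,3,1,5],[3,5,4,1,0,2],[0,1,3,4,2,5]), ([4,0,2,3,5,1],[2,1,0,4,5,3],[0,2,3,4,1,5]), ([4,0,2,5,1,3],[2,1,0,4,3,5],[0,2,3,1,5,4]), ([4,0,2,5,3,1],[2,1,0,4,3,5],[0,2,3,4,5,1]), ([4,0,3,1,2,5],[5,4,3,2,1,0],[0,3,4,2,5,1]), ([4,0,3,1,5,2],[4,5,3,2,1,0],[1,3,4,2,5,0]), ([4,0,3,2,1,5],[5,3,4,2,1,0],[0,3,4,1,5,2]), ([4,0,3,2,5,1],[1,0,2,4,3,5],[1,3,4,5,2,0]),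 ([4,0,3,5,1,2],[1,0,2,4,3,5],[1,3,4,0,5,2]), ([4,0,3,5,2,1],[1,0,2,4,3,5],[1,3,4,2,5,0]), ([4,0,5,1,2,3],[1,0,2,4,5,3],[1,3,4,2,5,0]), ([4,0,5,1,3,2],[1,0,2,4,5,3],[1,3,4,5,2,0]), ([4,0,5,2,1,3],[1,0,2,4,5,3],[1,3,4,0,5,2]), ([4,0,5,2,3,1],[4,3,5,2,1,0],[1,3,4,2,5,0]), ([4,0,5,3,1,2],[3,5,4,2,1,0],[0,3,4,1,5,2]), ([4,0,5,3,2,1],[3,4,5,2,1,0],[0,3,4,2,5,1]), ([4,1,0,2,3,5],[1,2,0,4,3,5],[0,2,3,4,1,5]), ([4,1,0,2,5,3],[1,2,0,4,5,3],[0,2,3,4,5,1]), ([4,1,0,3,2,5],[3,5,4,2,0,1],[0,1,3,4,2,5]), ([4,1,0,3,5,2],[1,2,0,4,5,3],[0,2,3,4,1,5]), ([4,1,0,5,2,3],[1,2,0,4,3,5],[0,2,3,1,5,4]), ([4,1,0,5,3,2],[1,2,0,4,3,5],[0,2,3,4,5,1]), ([4,1,2,0,3,5],[1,2,0,4,3,5],[0,1,3,4,2,5]), ([4,1,2,0,5,3],[1,2,0,4,5,3],[0,1,3,4,5,2]), ([4,1,2,3,0,5],[1,2,0,4,3,5],[0,1,3,2,4,5]), ([4,1,2,3,5,0],[1,2,0,4,5,3],[0,1,3,4,2,5]), ([4,1,2,5,0,3],[1,2,0,4,3,5],[0,1,3,2,5,4]), ([4,1,2,5,3,0],[1,2,0,4,3,5],[0,1,3,4,5,2]),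 ([4,1,3,0,2,5],[1,0,2,4,3,5],[0,3,4,2,1,5]), ([4,1,3,0,5,2],[1,2,0,3,4,5],[0,3,4,2,5,1]), ([4,1,3,2,0,5],[1,0,2,4,3,5],[0,3,4,1,2,5]), ([4,1,3,2,5,0],[1,2,0,3,4,5],[0,3,4,1,5,2])]"

definition cert6_13 :: "(nat list \<times> nat list \<times> nat list) list" where
 "cert6_13 = [([4,1,3,5,0,2],[1,0,2,4,3,5],[0,3,4,1,5,2]), ([4,1,3,5,2,0],[1,0,2,4,3,5],[0,3,4,2,5,1]), ([4,1,5,0,2,3],[1,0,2,4,5,3],[0,3,4,2,5,1]), ([4,1,5,0,3,2],[1,2,0,5,4,3],[0,3,4,1,5,2]), ([4,1,5,2,0,3],[1,0,2,4,5,3],[0,3,4,1,5,2]), ([4,1,5,2,3,0],[1,2,0,5,4,3],[0,3,4,2,5,1]), ([4,1,5,3,0,2],[1,0,2,4,5,3],[0,3,4,1,2,5]), ([4,1,5,3,2,0],[1,0,2,4,5,3],[0,3,4,2,1,5]), ([4,2,0,1,3,5],[5,4,3,1,2,0],[0,2,3,4,5,1]), ([4,2,0,1,5,3],[1,2,0,4,5,3],[1,2,3,4,5,0]), ([4,2,0,3,1,5],[3,5,4,1,2,0],[0,1,3,4,5,2]), ([4,2,0,3,5,1],[3,4,5,1,2,0],[0,2,3,4,5,1]), ([4,2,0,5,1,3],[3,5,4,1,2,0],[1,0,3,4,5,2]), ([4,2,0,5,3,1],[1,2,0,4,3,5],[1,2,3,4,5,0]), ([4,2,1,0,3,5],[5,4,3,0,1,2],[0,2,3,1,5,4]),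 ([4,2,1,0,5,3],[1,2,0,4,5,3],[1,0,3,4,5,2]), ([4,2,1,3,0,5],[3,5,4,0,1,2],[0,1,3,2,5,4]), ([4,2,1,3,5,0],[3,4,5,0,1,2],[0,2,3,1,5,4]), ([4,2,1,5,0,3],[1,2,0,4,3,5],[1,0,3,2,5,4]), ([4,2,1,5,3,0],[1,2,0,4,3,5],[1,0,3,4,5,2]), ([4,2,3,0,1,5],[5,3,4,0,1,2],[0,3,4,2,5,1]), ([4,2,3,0,5,1],[1,2,0,3,4,5],[1,3,4,2,5,0]), ([4,2,3,1,0,5],[5,4,3,0,1,2],[0,3,4,1,5,2]), ([4,2,3,1,5,0],[1,2,0,3,4,5],[1,3,4,0,5,2]), ([4,2,3,5,0,1],[1,2,0,3,4,5],[1,3,4,5,2,0]), ([4,2,3,5,1,0],[3,5,4,0,1,2],[1,3,4,2,5,0]), ([4,2,5,0,1,3],[5,3,4,0,1,2],[1,3,4,2,5,0]), ([4,2,5,0,3,1],[1,2,0,5,4,3],[1,3,4,0,5,2]), ([4,2,5,1,0,3],[1,2,0,5,4,3],[1,3,4,5,2,0]), ([4,2,5,1,3,0],[1,2,0,5,4,3],[1,3,4,2,5,0]), ([4,2,5,3,0,1],[3,4,5,0,1,2],[0,3,4,1,5,2]), ([4,2,5,3,1,0],[3,5,4,0,1,2],[0,3,4,2,5,1]), ([4,3,0,1,2,5],[5,3,4,1,2,0],[0,3,4,1,5,2]), ([4,3,0,1,5,2],[2,0,1,4,3,5],[1,3,4,5,2,0]), ([4,3,0,2,1,5],[5,4,3,1,2,0],[0,3,4,2,5,1]),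 ([4,3,0,2,5,1],[4,5,3,1,2,0],[1,3,4,2,5,0]), ([4,3,0,5,1,2],[2,0,1,4,3,5],[1,3,4,2,5,0]), ([4,3,0,5,2,1],[2,0,1,4,3,5],[1,3,4,0,5,2]), ([4,3,1,0,2,5],[5,3,4,0,2,1],[0,3,4,2,5,1]), ([4,3,1,0,5,2],[2,1,0,3,4,5],[1,3,4,2,5,0])]"

definition cert6_14 :: "(nat list \<times> nat list \<times> nat list) list" where
 "cert6_14 = [([4,3,1,2,0,5],[5,4,3,0,2,1],[0,3,4,1,5,2]), ([4,3,1,2,5,0],[2,1,0,3,4,5],[1,3,4,0,5,2]), ([4,3,1,5,0,2],[2,1,0,3,4,5],[1,3,4,5,2,0]), ([4,3,1,5,2,0],[3,5,4,0,2,1],[1,3,4,2,5,0]), ([4,3,2,0,1,5],[2,0,1,4,3,5],[0,3,4,2,1,5]), ([4,3,2,0,5,1],[2,1,0,3,4,5],[0,3,4,2,5,1]), ([4,3,2,1,0,5],[2,0,1,4,3,5],[0,3,4,1,2,5]), ([4,3,2,1,5,0],[2,1,0,3,4,5],[0,3,4,1,5,2]), ([4,3,2,5,0,1],[2,0,1,4,3,5],[0,3,4,1,5,2]), ([4,3,2,5,1,0],[2,0,1,4,3,5],[0,3,4,2,5,1]), ([4,3,5,0,1,2],[2,0,1,5,4,3],[3,4,5,0,2,1]), ([4,3,5,0,2,1],[0,2,1,4,5,3],[3,4,5,1,2,0]), ([4,3,5,1,0,2],[0,1,2,4,3,5],[3,4,5,0,1,2]), ([4,3,5,1,2,0],[1,0,2,3,4,5],[3,4,5,0,2,1]),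 ([4,3,5,2,0,1],[0,1,2,4,3,5],[3,4,5,0,2,1]), ([4,3,5,2,1,0],[0,1,2,4,3,5],[3,4,5,1,2,0]), ([4,5,0,1,2,3],[2,0,1,4,5,3],[1,3,4,0,5,2]), ([4,5,0,1,3,2],[4,3,5,1,2,0],[1,3,4,2,5,0]), ([4,5,0,2,1,3],[2,0,1,4,5,3],[1,3,4,2,5,0]), ([4,5,0,2,3,1],[2,0,1,4,5,3],[1,3,4,5,2,0]), ([4,5,0,3,1,2],[3,4,5,1,2,0],[0,3,4,2,5,1]), ([4,5,0,3,2,1],[3,5,4,1,2,0],[0,3,4,1,5,2]), ([4,5,1,0,2,3],[5,3,4,0,2,1],[1,3,4,2,5,0]), ([4,5,1,0,3,2],[2,1,0,5,4,3],[1,3,4,0,5,2]), ([4,5,1,2,0,3],[2,1,0,5,4,3],[1,3,4,5,2,0]), ([4,5,1,2,3,0],[2,1,0,5,4,3],[1,3,4,2,5,0]), ([4,5,1,3,0,2],[3,4,5,0,2,1],[0,3,4,1,5,2]), ([4,5,1,3,2,0],[3,5,4,0,2,1],[0,3,4,2,5,1]), ([4,5,2,0,1,3],[2,0,1,4,5,3],[0,3,4,2,5,1]), ([4,5,2,0,3,1],[2,1,0,5,4,3],[0,3,4,1,5,2]), ([4,5,2,1,0,3],[2,0,1,4,5,3],[0,3,4,1,5,2]), ([4,5,2,1,3,0],[2,1,0,5,4,3],[0,3,4,2,5,1]), ([4,5,2,3,0,1],[2,0,1,4,5,3],[0,3,4,1,2,5]), ([4,5,2,3,1,0],[2,0,1,4,5,3],[0,3,4,2,1,5]),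 ([4,5,3,0,1,2],[0,1,2,4,5,3],[3,4,5,1,2,0]), ([4,5,3,0,2,1],[1,0,2,5,4,3],[3,4,5,0,2,1]), ([4,5,3,1,0,2],[0,1,2,4,5,3],[3,4,5,0,2,1]), ([4,5,3,1,2,0],[0,2,1,4,3,5],[3,4,5,1,2,0]), ([4,5,3,2,0,1],[0,1,2,4,5,3],[3,4,5,0,1,2]), ([4,5,3,2,1,0],[2,0,1,3,4,5],[3,4,5,0,2,1])]"

definition cert6_15 :: "(nat list \<times> nat list \<times> nat list) list" where
 "cert6_15 = [([5,0,1,2,3,4],[2,1,0,5,4,3],[1,2,3,4,5,0]), ([5,0,1,2,4,3],[4,5,3,2,1,0],[0,2,3,4,5,1]), ([5,0,1,3,2,4],[3,5,4,2,1,0],[0,2,3,4,5,1]), ([5,0,1,3,4,2],[3,4,5,2,1,0],[0,1,3,4,5,2]), ([5,0,1,4,2,3],[2,1,0,5,3,4],[1,2,3,4,5,0]), ([5,0,1,4,3,2],[3,4,5,2,1,0],[1,0,3,4,5,2]), ([5,0,2,1,3,4],[2,1,0,5,4,3],[0,2,3,4,5,1]), ([5,0,2,1,4,3],[2,1,0,5,3,4],[0,2,3,4,1,5]), ([5,0,2,3,1,4],[2,1,0,5,4,3],[0,2,3,4,1,5]), ([5,0,2,3,4,1],[3,4,5,1,0,2],[0,1,3,4,2,5]), ([5,0,2,4,1,3],[2,1,0,5,3,4],[0,2,3,4,5,1]), ([5,0,2,4,3,1],[2,1,0,5,3,4],[0,2,3,1,5,4]), ([5,0,3,1,2,4],[5,4,3,2,1,0],[1,3,4,2,5,0]),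 ([5,0,3,1,4,2],[4,5,3,2,1,0],[0,3,4,2,5,1]), ([5,0,3,2,1,4],[1,0,2,5,3,4],[1,3,4,5,2,0]), ([5,0,3,2,4,1],[4,3,5,2,1,0],[0,3,4,1,5,2]), ([5,0,3,4,1,2],[1,0,2,5,3,4],[1,3,4,2,5,0]), ([5,0,3,4,2,1],[1,0,2,5,3,4],[1,3,4,0,5,2]), ([5,0,4,1,2,3],[1,0,2,5,4,3],[1,3,4,5,2,0]), ([5,0,4,1,3,2],[1,0,2,5,4,3],[1,3,4,2,5,0]), ([5,0,4,2,1,3],[5,3,4,2,1,0],[1,3,4,2,5,0]), ([5,0,4,2,3,1],[1,0,2,5,4,3],[1,3,4,0,5,2]), ([5,0,4,3,1,2],[3,5,4,2,1,0],[0,3,4,2,5,1]), ([5,0,4,3,2,1],[3,4,5,2,1,0],[0,3,4,1,5,2]), ([5,1,0,2,3,4],[1,2,0,5,4,3],[0,2,3,4,5,1]), ([5,1,0,2,4,3],[1,2,0,5,3,4],[0,2,3,4,1,5]), ([5,1,0,3,2,4],[1,2,0,5,4,3],[0,2,3,4,1,5]), ([5,1,0,3,4,2],[3,4,5,2,0,1],[0,1,3,4,2,5]), ([5,1,0,4,2,3],[1,2,0,5,3,4],[0,2,3,4,5,1]), ([5,1,0,4,3,2],[1,2,0,5,3,4],[0,2,3,1,5,4]), ([5,1,2,0,3,4],[1,2,0,5,4,3],[0,1,3,4,5,2]), ([5,1,2,0,4,3],[1,2,0,5,3,4],[0,1,3,4,2,5]), ([5,1,2,3,0,4],[1,2,0,5,4,3],[0,1,3,4,2,5]),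 ([5,1,2,3,4,0],[1,2,0,5,3,4],[0,1,3,2,4,5]), ([5,1,2,4,0,3],[1,2,0,5,3,4],[0,1,3,4,5,2]), ([5,1,2,4,3,0],[1,2,0,5,3,4],[0,1,3,2,5,4]), ([5,1,3,0,2,4],[1,2,0,3,5,4],[0,3,4,2,5,1]), ([5,1,3,0,4,2],[1,0,2,5,3,4],[0,3,4,2,1,5]), ([5,1,3,2,0,4],[1,2,0,3,5,4],[0,3,4,1,5,2]), ([5,1,3,2,4,0],[1,0,2,5,3,4],[0,3,4,1,2,5])]"

definition cert6_16 :: "(nat list \<times> nat list \<times> nat list) list" where
 "cert6_16 = [([5,1,3,4,0,2],[1,0,2,5,3,4],[0,3,4,2,5,1]), ([5,1,3,4,2,0],[1,0,2,5,3,4],[0,3,4,1,5,2]), ([5,1,4,0,2,3],[1,2,0,4,5,3],[0,3,4,1,5,2]), ([5,1,4,0,3,2],[1,0,2,5,4,3],[0,3,4,2,5,1]), ([5,1,4,2,0,3],[1,2,0,4,5,3],[0,3,4,2,5,1]), ([5,1,4,2,3,0],[1,0,2,5,4,3],[0,3,4,1,5,2]), ([5,1,4,3,0,2],[1,0,2,5,4,3],[0,3,4,2,1,5]), ([5,1,4,3,2,0],[1,0,2,5,4,3],[0,3,4,1,2,5]), ([5,2,0,1,3,4],[1,2,0,5,4,3],[1,2,3,4,5,0]), ([5,2,0,1,4,3],[4,5,3,1,2,0],[0,2,3,4,5,1]), ([5,2,0,3,1,4],[3,5,4,1,2,0],[0,2,3,4,5,1]), ([5,2,0,3,4,1],[3,4,5,1,2,0],[0,1,3,4,5,2]),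 ([5,2,0,4,1,3],[1,2,0,5,3,4],[1,2,3,4,5,0]), ([5,2,0,4,3,1],[3,4,5,1,2,0],[1,0,3,4,5,2]), ([5,2,1,0,3,4],[1,2,0,5,4,3],[1,0,3,4,5,2]), ([5,2,1,0,4,3],[4,5,3,0,1,2],[0,2,3,1,5,4]), ([5,2,1,3,0,4],[3,5,4,0,1,2],[0,2,3,1,5,4]), ([5,2,1,3,4,0],[3,4,5,0,1,2],[0,1,3,2,5,4]), ([5,2,1,4,0,3],[1,2,0,5,3,4],[1,0,3,4,5,2]), ([5,2,1,4,3,0],[1,2,0,5,3,4],[1,0,3,2,5,4]), ([5,2,3,0,1,4],[1,2,0,3,5,4],[1,3,4,2,5,0]), ([5,2,3,0,4,1],[4,3,5,0,1,2],[0,3,4,2,5,1]), ([5,2,3,1,0,4],[1,2,0,3,5,4],[1,3,4,0,5,2]), ([5,2,3,1,4,0],[4,5,3,0,1,2],[0,3,4,1,5,2]), ([5,2,3,4,0,1],[3,4,5,0,1,2],[1,3,4,2,5,0]), ([5,2,3,4,1,0],[1,2,0,3,5,4],[1,3,4,5,2,0]), ([5,2,4,0,1,3],[1,2,0,4,5,3],[1,3,4,0,5,2]), ([5,2,4,0,3,1],[4,3,5,0,1,2],[1,3,4,2,5,0]), ([5,2,4,1,0,3],[1,2,0,4,5,3],[1,3,4,2,5,0]), ([5,2,4,1,3,0],[1,2,0,4,5,3],[1,3,4,5,2,0]), ([5,2,4,3,0,1],[3,4,5,0,1,2],[0,3,4,2,5,1]), ([5,2,4,3,1,0],[3,5,4,0,1,2],[0,3,4,1,5,2]),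 ([5,3,0,1,2,4],[2,0,1,5,3,4],[1,3,4,5,2,0]), ([5,3,0,1,4,2],[4,3,5,1,2,0],[0,3,4,1,5,2]), ([5,3,0,2,1,4],[5,4,3,1,2,0],[1,3,4,2,5,0]), ([5,3,0,2,4,1],[4,5,3,1,2,0],[0,3,4,2,5,1]), ([5,3,0,4,1,2],[2,0,1,5,3,4],[1,3,4,0,5,2]), ([5,3,0,4,2,1],[2,0,1,5,3,4],[1,3,4,2,5,0]), ([5,3,1,0,2,4],[2,1,0,3,5,4],[1,3,4,2,5,0]), ([5,3,1,0,4,2],[4,3,5,0,2,1],[0,3,4,2,5,1])]"

definition cert6_17 :: "(nat list \<times> nat list \<times> nat list) list" where
 "cert6_17 = [([5,3,1,2,0,4],[2,1,0,3,5,4],[1,3,4,0,5,2]), ([5,3,1,2,4,0],[4,5,3,0,2,1],[0,3,4,1,5,2]), ([5,3,1,4,0,2],[3,4,5,0,2,1],[1,3,4,2,5,0]), ([5,3,1,4,2,0],[2,1,0,3,5,4],[1,3,4,5,2,0]), ([5,3,2,0,1,4],[2,1,0,3,5,4],[0,3,4,2,5,1]), ([5,3,2,0,4,1],[2,0,1,5,3,4],[0,3,4,2,1,5]), ([5,3,2,1,0,4],[2,1,0,3,5,4],[0,3,4,1,5,2]), ([5,3,2,1,4,0],[2,0,1,5,3,4],[0,3,4,1,2,5]), ([5,3,2,4,0,1],[2,0,1,5,3,4],[0,3,4,2,5,1]), ([5,3,2,4,1,0],[2,0,1,5,3,4],[0,3,4,1,5,2]), ([5,3,4,0,1,2],[0,2,1,5,4,3],[3,4,5,1,2,0]),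 ([5,3,4,0,2,1],[2,0,1,4,5,3],[3,4,5,0,2,1]), ([5,3,4,1,0,2],[1,0,2,3,5,4],[3,4,5,0,2,1]), ([5,3,4,1,2,0],[0,1,2,5,3,4],[3,4,5,0,1,2]), ([5,3,4,2,0,1],[0,1,2,5,3,4],[3,4,5,1,2,0]), ([5,3,4,2,1,0],[0,1,2,5,3,4],[3,4,5,0,2,1]), ([5,4,0,1,2,3],[5,3,4,1,2,0],[1,3,4,2,5,0]), ([5,4,0,1,3,2],[2,0,1,5,4,3],[1,3,4,0,5,2]), ([5,4,0,2,1,3],[2,0,1,5,4,3],[1,3,4,5,2,0]), ([5,4,0,2,3,1],[2,0,1,5,4,3],[1,3,4,2,5,0]), ([5,4,0,3,1,2],[3,4,5,1,2,0],[0,3,4,1,5,2]), ([5,4,0,3,2,1],[3,5,4,1,2,0],[0,3,4,2,5,1]), ([5,4,1,0,2,3],[2,1,0,4,5,3],[1,3,4,0,5,2]), ([5,4,1,0,3,2],[4,3,5,0,2,1],[1,3,4,2,5,0]), ([5,4,1,2,0,3],[2,1,0,4,5,3],[1,3,4,2,5,0]), ([5,4,1,2,3,0],[2,1,0,4,5,3],[1,3,4,5,2,0]), ([5,4,1,3,0,2],[3,4,5,0,2,1],[0,3,4,2,5,1]), ([5,4,1,3,2,0],[3,5,4,0,2,1],[0,3,4,1,5,2]), ([5,4,2,0,1,3],[2,1,0,4,5,3],[0,3,4,1,5,2]), ([5,4,2,0,3,1],[2,0,1,5,4,3],[0,3,4,2,5,1]), ([5,4,2,1,0,3],[2,1,0,4,5,3],[0,3,4,2,5,1]),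 ([5,4,2,1,3,0],[2,0,1,5,4,3],[0,3,4,1,5,2]), ([5,4,2,3,0,1],[2,0,1,5,4,3],[0,3,4,2,1,5]), ([5,4,2,3,1,0],[2,0,1,5,4,3],[0,3,4,1,2,5]), ([5,4,3,0,1,2],[1,0,2,4,5,3],[3,4,5,0,2,1]), ([5,4,3,0,2,1],[0,1,2,5,4,3],[3,4,5,1,2,0]), ([5,4,3,1,0,2],[0,2,1,5,3,4],[3,4,5,1,2,0]), ([5,4,3,1,2,0],[0,1,2,5,4,3],[3,4,5,0,2,1]), ([5,4,3,2,0,1],[2,0,1,3,5,4],[3,4,5,0,2,1]), ([5,4,3,2,1,0],[0,1,2,5,4,3],[3,4,5,0,1,2])]"

definition cert6 :: "(nat list \<times> nat list \<times> nat list) list" where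
 "cert6 = cert6_0 @ cert6_1 @ cert6_2 @ cert6_3 @ cert6_4 @ cert6_5 @ cert6_6 @ cert6_7 @ cert6_8 @ cert6_9 @ cert6_10 @ cert6_11 @ cert6_12 @ cert6_13 @ cert6_14 @ cert6_15 @ cert6_16 @ cert6_17"


definition reps :: "nat \<Rightarrow> nat list list" where
  "reps t = (if t = 3 then reps3 else if t = 4 then reps4 else if t = 5 then reps5 else reps6)"
definition cert :: "nat \<Rightarrow> (nat list \<times> nat list \<times> nat list) list" where
  "cert t = (if t = 3 then cert3 else if t = 4 then cert4 else if t = 5 then cert5 else cert6)"

definition p3 :: "nat \<Rightarrow> nat \<Rightarrow> nat \<Rightarrow> nat list list" where
  "p3 u v w = [[u,v,w],[u,w,v],[v,u,w],[v,w,u],[w,u,v],[w,v,u]]"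

definition inv_ok :: "nat \<Rightarrow> nat list \<Rightarrow> bool" where
  "inv_ok t s = (length s = t \<and> (if t = 3 then s \<in> set (p3 0 1 2)
   else if t = 4 then take 2 s \<in> set [[0,1],[1,0]] \<and> drop 2 s \<in> set [[2,3],[3,2]]
   else if t = 5 then s!0 = 0 \<and> (take 2 (drop 1 s) \<in> set [[1,2],[2,1]] \<and> drop 3 s \<in> set [[3,4],[4,3]]
                    \<or> take 2 (drop 1 s) \<in> set [[3,4],[4,3]] \<and> drop 3 s \<in> set [[1,2],[2,1]])
   else (take 3 s \<in> set (p3 0 1 2) \<and> drop 3 s \<in> set (p3 3 4 5)
         \<or> take 3 s \<in> set (p3 3 4 5) \<and> drop 3 s \<in> set (p3 0 1 2))))"

definition reps_ok :: "nat \<Rightarrow> bool" where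
  "reps_ok t = list_all (\<lambda>r. length r = t \<and> list_all (\<lambda>x. x < t) r \<and> poscert (Gp (Fp t r) (dead t r) t [])) (reps t)"

definition ent_ok :: "nat \<Rightarrow> nat list \<times> nat list \<times> nat list \<Rightarrow> bool" where
  "ent_ok t e = (case e of (p,s,r) \<Rightarrow> inv_ok t s \<and> r \<in> set (reps t) \<and>
      list_all (\<lambda>i. p!(s!i) = s!(r!i)) [0..<t])"

definition cover_ok :: "nat \<Rightarrow> bool" where
  "cover_ok t = (map fst (cert t) = permutations_of_list_impl [0..<t])"

lemma peval_padd [simp]: "peval (padd p q) x = peval p x + peval q x"
  by (induction p q rule: padd.induct) (auto simp: algebra_simps)

lemma peval_psc [simp]: "peval (psc c p) x = of_int c * peval p x"
  by (induction p) (auto simp: psc_def algebra_simps)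

lemma peval_pmul [simp]: "peval (pmul p q) x = peval p x * peval q x"
  by (induction p) (auto simp: algebra_simps)

lemma peval_append: "peval (p @ q) x = peval p x + x ^ length p * peval q x"
  by (induction p) (auto simp: algebra_simps)

lemma peval_zeros: "(\<forall>a\<in>set q. a = 0) \<Longrightarrow> peval q x = 0"
  by (induction q) auto

lemma peval_strip: "peval (strip p) x = peval p x"
proof -
  let ?P = "\<lambda>x::int. x = 0"
  have "rev p = takeWhile ?P (rev p) @ dropWhile ?P (rev p)" by simp
  hence "p = rev (dropWhile ?P (rev p)) @ rev (takeWhile ?P (rev p))"
    by (metis rev_append rev_rev_ident)
  hence "peval p x = peval (strip p) x + x ^ length (strip p) * peval (rev (takeWhile ?P (rev p))) x"
    by (metis peval_append strip_def)
  moreover have "peval (rev (takeWhile ?P (rev p))) x = 0"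
    by (rule peval_zeros) (auto dest: set_takeWhileD)
  ultimately show ?thesis by simp
qed

lemma peval_bound:
  assumes "x \<ge> 1"
  shows "\<bar>peval b x\<bar> * x \<le> of_int (sum_list (map abs b)) * x ^ length b"
proof (induction b)
  case Nil then show ?case by simp
next
  case (Cons a b)
  have x0: "x \<ge> 0" "x ^ length b \<ge> 1" using assms by (auto simp: one_le_power)
  have "\<bar>peval (a#b) x\<bar> * x \<le> (\<bar>of_int a\<bar> + x * \<bar>peval b x\<bar>) * x"
    using x0 by (intro mult_right_mono) (auto simp: abs_mult intro: order.trans[OF abs_triangle_ineq])
  also have "\<dots> = \<bar>of_int a\<bar> * x + x * (\<bar>peval b x\<bar> * x)" by (simp add: algebra_simps)
  also have "\<dots> \<le> \<bar>of_int a\<bar> * (x * x ^ length b) + x * (of_int (sum_list (map abs b)) * x ^ length b)"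
  proof (intro add_mono mult_left_mono)
    show "x \<le> x * x ^ length b" using x0 by (metis mult.right_neutral mult_left_mono)
  qed (use Cons x0 in auto)
  also have "\<dots> = of_int (sum_list (map abs (a#b))) * x ^ length (a#b)" by (simp add: algebra_simps)
  finally show ?case .
qed

lemma poscert_pos:
  assumes "poscert p" "x \<ge> 100"
  shows "peval p x > 0"
proof -
  define q where "q = strip p"
  have q: "q \<noteq> []" "last q > 0" "sum_list (map abs (butlast q)) < 100 * last q"
    using assms(1) by (auto simp: poscert_def q_def Let_def)
  define b where "b = butlast q"
  define c where "c = last q"
  have qe: "q = b @ [c]" using q(1) by (simp add: b_def c_def)
  have x1: "x \<ge> 1" using assms(2) by simp
  have "peval q x = peval b x + x ^ length b * of_int c" by (simp add: qe peval_append)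
  moreover have B: "\<bar>peval b x\<bar> * x \<le> of_int (sum_list (map abs b)) * x ^ length b"
    using peval_bound[OF x1] .
  moreover have "of_int (sum_list (map abs b)) < (100::real) * of_int c"
    using q(3) unfolding b_def c_def by linarith
  moreover have "(100::real) * of_int c \<le> x * of_int c" using assms(2) q(2) c_def by simp
  moreover have "x ^ length b > 0" using x1 by simp
  ultimately have "\<bar>peval b x\<bar> * x < x * of_int c * x ^ length b"
    by (smt (verit, ccfv_SIG) mult_strict_right_mono)
  hence "\<bar>peval b x\<bar> < of_int c * x ^ length b" using x1 by (simp add: algebra_simps)
  hence "peval q x > 0" using \<open>peval q x = _\<close> by (simp add: algebra_simps)
  thus ?thesis by (simp add: q_def peval_strip)
qed

section \<open>Summing pattern-invariant functions over strings\<close>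

definition Ls :: "nat \<Rightarrow> nat \<Rightarrow> nat list set" where
  "Ls d n = {xs. set xs \<subseteq> {0..<d} \<and> length xs = n}"

lemma finite_Ls [simp]: "finite (Ls d n)"
  unfolding Ls_def by (rule finite_lists_length_eq) simp

lemma Ls_0 [simp]: "Ls d 0 = {[]}"
  by (auto simp: Ls_def)

lemma sum_Ls_Suc:
  "(\<Sum>e\<in>Ls d (Suc n). f e) = (\<Sum>v\<in>{0..<d}. \<Sum>e\<in>Ls d n. f (v#e))"
proof -
  have eq: "Ls d (Suc n) = (\<lambda>(xs,v). v#xs) ` (Ls d n \<times> {0..<d})"
    by (simp add: Ls_def lists_length_Suc_eq)
  have inj: "inj_on (\<lambda>(xs,v). v#xs) (Ls d n \<times> {0..<d})"
    by (auto simp: inj_on_def)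
  have "(\<Sum>e\<in>Ls d (Suc n). f e) = (\<Sum>(xs,v)\<in>Ls d n \<times> {0..<d}. f (v#xs))"
    unfolding eq by (subst sum.reindex[OF inj]) (simp add: case_prod_beta)
  also have "\<dots> = (\<Sum>xs\<in>Ls d n. \<Sum>v\<in>{0..<d}. f (v#xs))"
    by (simp add: sum.cartesian_product)
  also have "\<dots> = (\<Sum>v\<in>{0..<d}. \<Sum>e\<in>Ls d n. f (v#e))"
    by (rule sum.swap)
  finally show ?thesis .
qed

lemma peval_Sp:
  "peval (Sp F Dd n ys vs) x = sum_list (map (\<lambda>v. peval (Gp F Dd n (ys@[v])) x) vs)"
  by (induction vs) auto

lemma fresh_notin: "Suc (sum_list ys) \<notin> set (ys::nat list)"
  using member_le_sum_list[of _ ys] by fastforce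

lemma G_sound:
  fixes F :: "nat list \<Rightarrow> int list" and Dd :: "nat list \<Rightarrow> bool"
  assumes F_inv: "\<And>xs g. inj_on g (set xs) \<Longrightarrow> F (map g xs) = F xs"
    and D_inv: "\<And>xs g. inj_on g (set xs) \<Longrightarrow> Dd (map g xs) = Dd xs"
    and D_zero: "\<And>xs e. Dd xs \<Longrightarrow> F (xs @ e) = []"
  shows "set xs \<subseteq> {0..<d} \<Longrightarrow> inj_on g (set xs) \<Longrightarrow> ys = map g xs \<Longrightarrow>
    (\<Sum>e\<in>Ls d n. peval (F (xs @ e)) (real d)) = peval (Gp F Dd n ys) (real d)"
proof (induction n arbitrary: xs g ys)
  case 0
  then show ?case using F_inv D_inv D_zero[of xs "[]"] by auto
next
  case (Suc n)
  note xs_sub = Suc.prems(1) and ginj = Suc.prems(2) and ys_eq = Suc.prems(3)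
  have Dys: "Dd ys = Dd xs" using D_inv ginj ys_eq by simp
  show ?case
  proof (cases "Dd xs")
    case True
    then show ?thesis using Dys D_zero by simp
  next
    case False
    define fr where "fr = Suc (sum_list ys)"
    define h where "h v = (if v \<in> set xs then g v else fr)" for v
    define \<Phi> where "\<Phi> w = peval (Gp F Dd n (ys @ [w])) (real d)" for w
    have frn: "fr \<notin> g ` set xs" using fresh_notin[of ys] ys_eq by (simp add: fr_def)
    have step: "(\<Sum>e\<in>Ls d n. peval (F ((xs @ [v]) @ e)) (real d)) = \<Phi> (h v)" if v: "v \<in> {0..<d}" for v
    proof (cases "v \<in> set xs")
      case True
      have s1: "set (xs @ [v]) \<subseteq> {0..<d}" using xs_sub v by auto
      have i1: "inj_on g (set (xs @ [v]))" using ginj True by (simp add: insert_absorb)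
      have m1: "ys @ [g v] = map g (xs @ [v])" using ys_eq by simp
      show ?thesis unfolding \<Phi>_def h_def using True Suc.IH[OF s1 i1 m1] by simp
    next
      case False
      have s1: "set (xs @ [v]) \<subseteq> {0..<d}" using xs_sub v by auto
      have mg: "map (g(v := fr)) xs = map g xs" using False by (intro map_cong) auto
      have i1: "inj_on (g(v := fr)) (set (xs @ [v]))"
      proof -
        have "inj_on (g(v := fr)) (set xs)"
          using ginj False by (auto simp: inj_on_def)
        moreover have "fr \<notin> (g(v := fr)) ` set xs"
          using frn False by auto
        ultimately show ?thesis using frn False by auto
      qed
      have m1: "ys @ [fr] = map (g(v := fr)) (xs @ [v])" using ys_eq mg by simp
      show ?thesis unfolding \<Phi>_def h_def using False Suc.IH[OF s1 i1 m1] by simp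
    qed
    have "(\<Sum>e\<in>Ls d (Suc n). peval (F (xs @ e)) (real d)) = (\<Sum>v\<in>{0..<d}. \<Phi> (h v))"
      unfolding sum_Ls_Suc by (intro sum.cong refl) (simp add: step[symmetric])
    also have "\<dots> = (\<Sum>v\<in>{0..<d} - set xs. \<Phi> (h v)) + (\<Sum>v\<in>set xs. \<Phi> (h v))"
      using xs_sub by (intro sum.subset_diff) auto
    also have "(\<Sum>v\<in>{0..<d} - set xs. \<Phi> (h v)) = real (card ({0..<d} - set xs)) * \<Phi> fr"
      by (simp add: h_def)
    also have "card ({0..<d} - set xs) = d - card (set xs)"
      using xs_sub by (simp add: card_Diff_subset)
    also have "(\<Sum>v\<in>set xs. \<Phi> (h v)) = (\<Sum>v\<in>set xs. \<Phi> (g v))"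
      by (simp add: h_def)
    also have "\<dots> = (\<Sum>w\<in>set ys. \<Phi> w)"
      using ginj ys_eq by (simp add: sum.reindex)
    finally have L: "(\<Sum>e\<in>Ls d (Suc n). peval (F (xs @ e)) (real d))
        = real (d - card (set xs)) * \<Phi> fr + (\<Sum>w\<in>set ys. \<Phi> w)" .
    have cxs: "card (set xs) \<le> d" using xs_sub card_mono[of "{0..<d}" "set xs"] by simp
    have cys: "card (set ys) = card (set xs)" using ginj ys_eq by (simp add: card_image)
    have "peval (Gp F Dd (Suc n) ys) (real d)
        = (\<Sum>w\<in>set ys. \<Phi> w) + (real d - real (card (set ys))) * \<Phi> fr"
      using False Dys
      by (simp add: peval_Sp \<Phi>_def fr_def sum_list_distinct_conv_sum_set length_remdups_card_conv algebra_simps)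
    then show ?thesis using L cxs cys by (simp add: of_nat_diff)
  qed
qed

section \<open>Connecting the trace to the list computation\<close>

lemma upto_l_eq: "upto_l t = [0..<t]"
  by (induction t) auto

lemma peval_Op: "peval (Op x y z) (real d) = Oplus d x y z"
  by (auto simp: Op_def Oplus_def wt3_def power2_eq_square)

lemma Op_inj: "inj_on g {x,y,z} \<Longrightarrow> Op (g x) (g y) (g z) = Op x y z"
  unfolding Op_def inj_on_def by (smt (verit, best) insertCI)

lemma Qp_inv:
  assumes "length xs = t" "inj_on g (set xs)"
  shows "Qp t (map g xs) = Qp t xs"
proof -
  have H: "Op (map g xs ! i) (map g xs ! j) (map g xs ! k) = Op (xs!i) (xs!j) (xs!k)"
    if "i < t" "j < t" "k < t" for i j k
  proof -
    have "{xs!i, xs!j, xs!k} \<subseteq> set xs" using that assms(1) by auto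
    hence "inj_on g {xs!i, xs!j, xs!k}" by (rule inj_on_subset[OF assms(2)])
    thus ?thesis using that assms(1) Op_inj[of g "xs!i" "xs!j" "xs!k"] by simp
  qed
  consider "t = 3" | "t = 4" | "t = 5" | "t = 6" | "t \<notin> {3,4,5,6}" by blast
  then show ?thesis
  proof cases
    case 1 then show ?thesis unfolding Qp_def using H[of 0 1 2] by simp
  next
    case 2 then show ?thesis unfolding Qp_def using H[of 0 1 2] H[of 0 1 3] by simp
  next
    case 3 then show ?thesis unfolding Qp_def using H[of 0 1 2] H[of 0 3 4] by simp
  next
    case 4 then show ?thesis unfolding Qp_def using H[of 0 1 2] H[of 3 4 5] by simp
  next
    case 5 then show ?thesis unfolding Qp_def by auto
  qed
qed

lemma Fp_inv:
  assumes "\<forall>i<t. r!i < t" "inj_on g (set xs)"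
  shows "Fp t r (map g xs) = Fp t r xs"
proof (cases "length xs = t")
  case True
  have "(map g xs ! (r!i) = map g xs ! i) = (xs ! (r!i) = xs ! i)" if "i < t" for i
  proof -
    have "xs!(r!i) \<in> set xs" "xs!i \<in> set xs" using that assms(1) True by auto
    thus ?thesis using that assms True inj_on_eq_iff[OF assms(2)] by simp
  qed
  then show ?thesis using True Qp_inv[OF True assms(2)]
    unfolding Fp_def upto_l_eq list_all_iff by auto
qed (simp add: Fp_def)

lemma dead_inv:
  assumes "inj_on g (set ys)"
  shows "dead t p (map g ys) = dead t p ys"
proof -
  have "(map g ys ! (p!i) = map g ys ! i) = (ys ! (p!i) = ys ! i)"
    if "p!i < length ys" "i < length ys" for i
  proof -
    have "ys!(p!i) \<in> set ys" "ys!i \<in> set ys" using that by auto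
    thus ?thesis using that inj_on_eq_iff[OF assms] by simp
  qed
  then show ?thesis unfolding dead_def list_all_iff by auto
qed

lemma dead_zero:
  assumes "dead t r xs"
  shows "Fp t r (xs @ e) = []"
proof -
  obtain i where i: "i < t" "r!i < length xs" "i < length xs" "xs!(r!i) \<noteq> xs!i"
    using assms unfolding dead_def list_all_iff upto_l_eq by auto
  hence "(xs @ e)!(r!i) \<noteq> (xs @ e)!i" by (simp add: nth_append)
  thus ?thesis using i(1) unfolding Fp_def list_all_iff upto_l_eq by auto
qed

definition tofun :: "nat \<Rightarrow> nat list \<Rightarrow> nat \<Rightarrow> nat" where
  "tofun t xs = (\<lambda>i. if i < t then xs!i else undefined)"

definition fl :: "nat list \<Rightarrow> nat \<Rightarrow> nat" where
  "fl s i = (if i < length s then s!i else i)"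

lemma bij_tofun: "bij_betw (tofun t) (Ls d t) (strings d t)"
proof (rule bij_betw_byWitness[where f' = "\<lambda>a. map a [0..<t]"])
  show "\<forall>xs\<in>Ls d t. map (tofun t xs) [0..<t] = xs"
  proof
    fix xs assume "xs \<in> Ls d t"
    hence "length xs = t" by (simp add: Ls_def)
    thus "map (tofun t xs) [0..<t] = xs" by (intro nth_equalityI) (auto simp: tofun_def)
  qed
  show "\<forall>a\<in>strings d t. tofun t (map a [0..<t]) = a"
  proof
    fix a assume a: "a \<in> strings d t"
    show "tofun t (map a [0..<t]) = a"
    proof
      fix i show "tofun t (map a [0..<t]) i = a i"
        using a PiE_arb[of a "{0..<t}" "\<lambda>_. {0..<d}" i] by (simp add: strings_def tofun_def)
    qed
  qed
  show "tofun t ` Ls d t \<subseteq> strings d t"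
  proof
    fix f assume "f \<in> tofun t ` Ls d t"
    then obtain xs where xs: "set xs \<subseteq> {0..<d}" "length xs = t" "f = tofun t xs"
      by (auto simp: Ls_def)
    have "xs ! i \<in> {0..<d}" if "i < t" for i using xs that nth_mem by blast
    then show "f \<in> strings d t"
      unfolding strings_def xs(3) by (intro PiE_I) (auto simp: tofun_def)
  qed
  show "(\<lambda>a. map a [0..<t]) ` strings d t \<subseteq> Ls d t"
  proof
    fix xs assume "xs \<in> (\<lambda>a. map a [0..<t]) ` strings d t"
    then obtain a where a: "a \<in> strings d t" "xs = map a [0..<t]" by blast
    have "a i \<in> {0..<d}" if "i < t" for i
      using a(1) that unfolding strings_def by (auto dest: PiE_mem)
    then show "xs \<in> Ls d t" using a(2) by (auto simp: Ls_def)
  qed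
qed

lemma finite_strings [simp]: "finite (strings d t)"
  by (simp add: strings_def finite_PiE)

lemma trWQ_alt:
  "trWQ d t \<pi> = (\<Sum>a\<in>strings d t. if \<forall>i<t. a (\<pi> i) = a i then Qdiag d t a else 0)"
proof -
  have "(\<Sum>b\<in>strings d t. Wmat t \<pi> a b * Qmat d t b a)
      = (if \<forall>i<t. a (\<pi> i) = a i then Qdiag d t a else 0)" if "a \<in> strings d t" for a
  proof -
    have "(\<Sum>b\<in>strings d t. Wmat t \<pi> a b * Qmat d t b a)
        = (\<Sum>b\<in>strings d t. if b = a then Wmat t \<pi> a a * Qdiag d t a else 0)"
      by (intro sum.cong) (auto simp: Qmat_def)
    also have "\<dots> = Wmat t \<pi> a a * Qdiag d t a" using that by simp
    finally show ?thesis by (auto simp add: Wmat_def)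
  qed
  thus ?thesis unfolding trWQ_def by (intro sum.cong) auto
qed

lemma Qdiag_Qp:
  assumes "length xs = t" "t \<in> {3,4,5,6}"
  shows "Qdiag d t (tofun t xs) = peval (Qp t xs) (real d)"
  using assms by (auto simp: Qdiag_def Qp_def tofun_def peval_Op power2_eq_square)

lemma trWQ_Gp:
  assumes "length r = t" "\<forall>i<t. r!i < t" "t \<in> {3,4,5,6}"
  shows "trWQ d t (fl r) = peval (Gp (Fp t r) (dead t r) t []) (real d)"
proof -
  let ?H = "\<lambda>a. if \<forall>i<t. a (fl r i) = a i then Qdiag d t a else 0"
  have "trWQ d t (fl r) = (\<Sum>a\<in>strings d t. ?H a)" by (rule trWQ_alt)
  also have "\<dots> = (\<Sum>xs\<in>Ls d t. ?H (tofun t xs))"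
    by (rule sum.reindex_bij_betw[OF bij_tofun, symmetric])
  also have "\<dots> = (\<Sum>xs\<in>Ls d t. peval (Fp t r xs) (real d))"
  proof (intro sum.cong refl)
    fix xs assume "xs \<in> Ls d t"
    hence len: "length xs = t" by (simp add: Ls_def)
    have "(\<forall>i<t. tofun t xs (fl r i) = tofun t xs i) = (\<forall>i<t. xs!(r!i) = xs!i)"
      using assms(1,2) by (auto simp: tofun_def fl_def)
    thus "?H (tofun t xs) = peval (Fp t r xs) (real d)"
      using len Qdiag_Qp[OF len assms(3)] by (auto simp: Fp_def list_all_iff upto_l_eq)
  qed
  also have "\<dots> = (\<Sum>e\<in>Ls d t. peval (Fp t r ([] @ e)) (real d))" by simp
  also have "\<dots> = peval (Gp (Fp t r) (dead t r) t (map id [])) (real d)"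
    by (rule G_sound) (auto simp: Fp_inv[OF assms(2)] dead_inv dead_zero)
  finally show ?thesis by simp
qed

section \<open>Conjugation invariance\<close>

lemma comp_strings:
  assumes "\<tau> permutes {0..<t}" "a \<in> strings d t"
  shows "a \<circ> \<tau> \<in> strings d t"
  unfolding strings_def
proof (rule PiE_I)
  fix i assume "i \<in> {0..<t}"
  hence "\<tau> i \<in> {0..<t}" using permutes_in_image[OF assms(1)] by simp
  thus "(a \<circ> \<tau>) i \<in> {0..<d}" using assms(2) unfolding strings_def by (auto dest: PiE_mem)
next
  fix i assume "i \<notin> {0..<t}"
  thus "(a \<circ> \<tau>) i = undefined"
    using permutes_not_in[OF assms(1)] assms(2) PiE_arb[of a "{0..<t}" "\<lambda>_. {0..<d}" i]
    unfolding strings_def by simp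
qed

lemma trWQ_conj:
  assumes \<sigma>: "\<sigma> permutes {0..<t}"
    and comm: "\<forall>i<t. \<pi> (\<sigma> i) = \<sigma> (\<rho> i)"
    and inv: "\<And>a. Qdiag d t (a \<circ> \<sigma>) = Qdiag d t a"
  shows "trWQ d t \<pi> = trWQ d t \<rho>"
proof -
  have \<sigma>i: "inv \<sigma> permutes {0..<t}" using permutes_inv[OF \<sigma>] .
  have bij: "bij_betw (\<lambda>a. a \<circ> \<sigma>) (strings d t) (strings d t)"
  proof (rule bij_betw_byWitness[where f' = "\<lambda>a. a \<circ> inv \<sigma>"])
    show "\<forall>a\<in>strings d t. a \<circ> \<sigma> \<circ> inv \<sigma> = a"
      using permutes_inverses(1)[OF \<sigma>] by (auto simp: fun_eq_iff)
    show "\<forall>a\<in>strings d t. a \<circ> inv \<sigma> \<circ> \<sigma> = a"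
      using permutes_inverses(2)[OF \<sigma>] by (auto simp: fun_eq_iff)
    show "(\<lambda>a. a \<circ> \<sigma>) ` strings d t \<subseteq> strings d t"
      using comp_strings[OF \<sigma>] by auto
    show "(\<lambda>a. a \<circ> inv \<sigma>) ` strings d t \<subseteq> strings d t"
      using comp_strings[OF \<sigma>i] by auto
  qed
  let ?Hp = "\<lambda>a. if \<forall>i<t. a (\<pi> i) = a i then Qdiag d t a else 0"
  let ?Hr = "\<lambda>a. if \<forall>i<t. a (\<rho> i) = a i then Qdiag d t a else 0"
  have eqv: "(\<forall>i<t. (a \<circ> \<sigma>) (\<rho> i) = (a \<circ> \<sigma>) i) = (\<forall>j<t. a (\<pi> j) = a j)" for a :: "nat \<Rightarrow> nat"
  proof
    assume H: "\<forall>i<t. (a \<circ> \<sigma>) (\<rho> i) = (a \<circ> \<sigma>) i"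
    show "\<forall>j<t. a (\<pi> j) = a j"
    proof (intro allI impI)
      fix j assume j: "j < t"
      define i where "i = inv \<sigma> j"
      have i: "i < t" using permutes_in_image[OF \<sigma>i, of j] j by (simp add: i_def)
      have sj: "\<sigma> i = j" using permutes_inverses(1)[OF \<sigma>] by (simp add: i_def)
      have "a (\<pi> j) = a (\<sigma> (\<rho> i))" using comm i sj by metis
      also have "\<dots> = a (\<sigma> i)" using H i by simp
      finally show "a (\<pi> j) = a j" using sj by simp
    qed
  next
    assume H: "\<forall>j<t. a (\<pi> j) = a j"
    show "\<forall>i<t. (a \<circ> \<sigma>) (\<rho> i) = (a \<circ> \<sigma>) i"
    proof (intro allI impI)
      fix i assume i: "i < t"
      have "\<sigma> i < t" using permutes_in_image[OF \<sigma>, of i] i by simp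
      thus "(a \<circ> \<sigma>) (\<rho> i) = (a \<circ> \<sigma>) i" using H comm i by (metis comp_apply)
    qed
  qed
  have "trWQ d t \<rho> = (\<Sum>a\<in>strings d t. ?Hr a)" by (rule trWQ_alt)
  also have "\<dots> = (\<Sum>a\<in>strings d t. ?Hr (a \<circ> \<sigma>))"
    by (rule sum.reindex_bij_betw[OF bij, symmetric])
  also have "\<dots> = (\<Sum>a\<in>strings d t. ?Hp a)"
    by (intro sum.cong refl) (simp only: eqv inv)
  also have "\<dots> = trWQ d t \<pi>" by (rule trWQ_alt[symmetric])
  finally show ?thesis by simp
qed

section \<open>Symmetries of Q\<close>

lemma fl_permutes:
  assumes "length s = t" "mset s = mset [0..<t]"
  shows "fl s permutes {0..<t}"
proof (rule bij_imp_permutes)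
  have dist: "distinct s" using mset_eq_imp_distinct_iff[OF assms(2)] by simp
  have set: "set s = {0..<t}" using mset_eq_setD[OF assms(2)] by simp
  have "inj_on (fl s) {0..<t}"
    using dist assms(1) by (auto simp: inj_on_def fl_def nth_eq_iff_index_eq)
  moreover have "fl s ` {0..<t} = {0..<t}"
  proof -
    have "fl s ` {0..<t} = (\<lambda>i. s!i) ` {0..<length s}" using assms(1) by (auto simp: fl_def)
    also have "\<dots> = set s" by (auto simp: set_conv_nth)
    finally show ?thesis using set by simp
  qed
  ultimately show "bij_betw (fl s) {0..<t} {0..<t}" by (simp add: bij_betw_def)
  show "x \<notin> {0..<t} \<Longrightarrow> fl s x = x" for x using assms(1) by (simp add: fl_def)
qed

lemma Oplus_swap12: "Oplus d y x z = Oplus d x y z"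
  by (auto simp: Oplus_def wt3_def)

lemma Oplus_swap23: "Oplus d x z y = Oplus d x y z"
  by (auto simp: Oplus_def wt3_def)

lemma Oplus_p3:
  assumes "[x',y',z'] \<in> set (p3 x y z)"
  shows "Oplus d (a x') (a y') (a z') = Oplus d (a x) (a y) (a z)"
  using assms Oplus_swap12 Oplus_swap23 unfolding p3_def by auto

lemma mset_p3: "xs \<in> set (p3 x y z) \<Longrightarrow> mset xs = mset [x,y,z]"
  unfolding p3_def by (auto simp: add_mset_commute)

lemma upt6: "[0..<6] = [0,1,2,3,4,5::nat]" by (simp add: upt_rec)
lemma upt5: "[0..<5] = [0,1,2,3,4::nat]" by (simp add: upt_rec)
lemma upt4: "[0..<4] = [0,1,2,3::nat]" by (simp add: upt_rec)
lemma upt3: "[0..<3] = [0,1,2::nat]" by (simp add: upt_rec)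

lemma inv_ok_sound:
  assumes "inv_ok t s" "t \<in> {3,4,5,6}"
  shows "fl s permutes {0..<t} \<and> (\<forall>a. Qdiag d t (a \<circ> fl s) = Qdiag d t a)"
proof -
  have len: "length s = t" using assms(1) by (simp add: inv_ok_def)
  consider "t = 3" | "t = 4" | "t = 5" | "t = 6" using assms(2) by blast
  then show ?thesis
  proof cases
    case 1
    obtain s0 s1 s2 where s: "s = [s0,s1,s2]"
      using len 1 by (auto simp: numeral_eq_Suc length_Suc_conv)
    have m: "[s0,s1,s2] \<in> set (p3 0 1 2)" using assms(1) 1 s by (simp add: inv_ok_def)
    have "mset s = mset [0..<t]" using mset_p3[OF m] s 1 by (simp add: upt3)
    moreover have "Qdiag d t (a \<circ> fl s) = Qdiag d t a" for a
      using Oplus_p3[OF m, of d a] 1 s by (simp add: Qdiag_def fl_def)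
    ultimately show ?thesis using fl_permutes len by blast
  next
    case 2
    obtain s0 s1 s2 s3 where s: "s = [s0,s1,s2,s3]"
      using len 2 by (auto simp: numeral_eq_Suc length_Suc_conv)
    have m: "[s0,s1] \<in> set [[0,1],[1,0]]" "[s2,s3] \<in> set [[2,3],[3,2]]"
      using assms(1) 2 s by (simp_all add: inv_ok_def)
    have "mset s = mset [0..<t]" using m s 2 by (auto simp: upt4 add_mset_commute)
    moreover have "Qdiag d t (a \<circ> fl s) = Qdiag d t a" for a
      using m 2 s Oplus_swap12 by (auto simp: Qdiag_def fl_def)
    ultimately show ?thesis using fl_permutes len by blast
  next
    case 3
    obtain s0 s1 s2 s3 s4 where s: "s = [s0,s1,s2,s3,s4]"
      using len 3 by (auto simp: numeral_eq_Suc length_Suc_conv)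
    have m: "s0 = 0" "[s1,s2] \<in> set [[1,2],[2,1]] \<and> [s3,s4] \<in> set [[3,4],[4,3]]
         \<or> [s1,s2] \<in> set [[3,4],[4,3]] \<and> [s3,s4] \<in> set [[1,2],[2,1]]"
      using assms(1) 3 s by (simp_all add: inv_ok_def)
    have "mset s = mset [0..<t]" using m s 3 by (auto simp: upt5 add_mset_commute)
    moreover have "Qdiag d t (a \<circ> fl s) = Qdiag d t a" for a
      using m 3 s Oplus_swap23 by (auto simp: Qdiag_def fl_def)
    ultimately show ?thesis using fl_permutes len by blast
  next
    case 4
    obtain s0 s1 s2 s3 s4 s5 where s: "s = [s0,s1,s2,s3,s4,s5]"
      using len 4 by (auto simp: numeral_eq_Suc length_Suc_conv)
    have m: "[s0,s1,s2] \<in> set (p3 0 1 2) \<and> [s3,s4,s5] \<in> set (p3 3 4 5)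
         \<or> [s0,s1,s2] \<in> set (p3 3 4 5) \<and> [s3,s4,s5] \<in> set (p3 0 1 2)"
      using assms(1) 4 s by (simp add: inv_ok_def)
    have "mset s = mset [0..<t]"
    proof -
      have "mset s = mset [s0,s1,s2] + mset [s3,s4,s5]" using s by simp
      also have "\<dots> = mset [0,1,2::nat] + mset [3,4,5]"
        using m
      proof (elim disjE conjE)
        assume m1: "[s0,s1,s2] \<in> set (p3 0 1 2)" and m2: "[s3,s4,s5] \<in> set (p3 3 4 5)"
        show ?thesis by (simp only: mset_p3[OF m1] mset_p3[OF m2])
      next
        assume m1: "[s0,s1,s2] \<in> set (p3 3 4 5)" and m2: "[s3,s4,s5] \<in> set (p3 0 1 2)"
        show ?thesis by (simp only: mset_p3[OF m1] mset_p3[OF m2] add.commute)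
      qed
      also have "\<dots> = mset [0..<t]" using 4 by (simp add: upt6 add_mset_commute)
      finally show ?thesis .
    qed
    moreover have "Qdiag d t (a \<circ> fl s) = Qdiag d t a" for a
    proof -
      have "Qdiag d t (a \<circ> fl s) = Oplus d (a s0) (a s1) (a s2) * Oplus d (a s3) (a s4) (a s5)"
        using 4 s by (simp add: Qdiag_def fl_def)
      also have "\<dots> = Qdiag d t a"
        using m Oplus_p3[of s0 s1 s2 0 1 2 d a] Oplus_p3[of s3 s4 s5 3 4 5 d a]
          Oplus_p3[of s0 s1 s2 3 4 5 d a] Oplus_p3[of s3 s4 s5 0 1 2 d a] 4
        by (auto simp: Qdiag_def)
      finally show ?thesis .
    qed
    ultimately show ?thesis using fl_permutes len by blast
  qed
qed

lemma cert3_0_ok: "list_all (ent_ok 3) cert3_0" by code_simp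

lemma ents_ok_3: "list_all (ent_ok 3) (cert 3)"
  by (simp only: cert_def cert3_def list_all_append cert3_0_ok simp_thms if_True if_False numeral_eq_iff semiring_norm)

lemma cover_ok_3: "cover_ok 3" by code_simp

lemma reps_ok_3: "reps_ok 3" by code_simp

lemma cert4_0_ok: "list_all (ent_ok 4) cert4_0" by code_simp

lemma ents_ok_4: "list_all (ent_ok 4) (cert 4)"
  by (simp only: cert_def cert4_def list_all_append cert4_0_ok simp_thms if_True if_False numeral_eq_iff semiring_norm)

lemma cover_ok_4: "cover_ok 4" by code_simp

lemma reps_ok_4: "reps_ok 4" by code_simp

lemma cert5_0_ok: "list_all (ent_ok 5) cert5_0" by code_simp
lemma cert5_1_ok: "list_all (ent_ok 5) cert5_1" by code_simp
lemma cert5_2_ok: "list_all (ent_ok 5) cert5_2" by code_simp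

lemma ents_ok_5: "list_all (ent_ok 5) (cert 5)"
  by (simp only: cert_def cert5_def list_all_append cert5_0_ok cert5_1_ok cert5_2_ok simp_thms if_True if_False numeral_eq_iff semiring_norm)

lemma cover_ok_5: "cover_ok 5" by code_simp

lemma reps_ok_5: "reps_ok 5" by code_simp

lemma cert6_0_ok: "list_all (ent_ok 6) cert6_0" by code_simp
lemma cert6_1_ok: "list_all (ent_ok 6) cert6_1" by code_simp
lemma cert6_2_ok: "list_all (ent_ok 6) cert6_2" by code_simp
lemma cert6_3_ok: "list_all (ent_ok 6) cert6_3" by code_simp
lemma cert6_4_ok: "list_all (ent_ok 6) cert6_4" by code_simp
lemma cert6_5_ok: "list_all (ent_ok 6) cert6_5" by code_simp
lemma cert6_6_ok: "list_all (ent_ok 6) cert6_6" by code_simp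
lemma cert6_7_ok: "list_all (ent_ok 6) cert6_7" by code_simp
lemma cert6_8_ok: "list_all (ent_ok 6) cert6_8" by code_simp
lemma cert6_9_ok: "list_all (ent_ok 6) cert6_9" by code_simp
lemma cert6_10_ok: "list_all (ent_ok 6) cert6_10" by code_simp
lemma cert6_11_ok: "list_all (ent_ok 6) cert6_11" by code_simp
lemma cert6_12_ok: "list_all (ent_ok 6) cert6_12" by code_simp
lemma cert6_13_ok: "list_all (ent_ok 6) cert6_13" by code_simp
lemma cert6_14_ok: "list_all (ent_ok 6) cert6_14" by code_simp
lemma cert6_15_ok: "list_all (ent_ok 6) cert6_15" by code_simp
lemma cert6_16_ok: "list_all (ent_ok 6) cert6_16" by code_simp
lemma cert6_17_ok: "list_all (ent_ok 6) cert6_17" by code_simp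

lemma ents_ok_6: "list_all (ent_ok 6) (cert 6)"
  by (simp only: cert_def cert6_def list_all_append cert6_0_ok cert6_1_ok cert6_2_ok cert6_3_ok cert6_4_ok cert6_5_ok cert6_6_ok cert6_7_ok cert6_8_ok cert6_9_ok cert6_10_ok cert6_11_ok cert6_12_ok cert6_13_ok cert6_14_ok cert6_15_ok cert6_16_ok cert6_17_ok simp_thms if_True if_False numeral_eq_iff semiring_norm)

lemma cover_ok_6: "cover_ok 6" by code_simp

lemma reps_ok_6: "reps_ok 6" by code_simp

lemma comp_ok:
  assumes "t \<in> {3,4,5,6}"
  shows "cover_ok t \<and> list_all (ent_ok t) (cert t) \<and> reps_ok t"
  using assms ents_ok_3 ents_ok_4 ents_ok_5 ents_ok_6 cover_ok_3 cover_ok_4 cover_ok_5 cover_ok_6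
    reps_ok_3 reps_ok_4 reps_ok_5 reps_ok_6 by auto

lemma perm_list_mem:
  assumes "\<pi> permutes {0..<t}"
  shows "map \<pi> [0..<t] \<in> set (permutations_of_list_impl [0..<t])"
proof -
  have inj: "inj_on \<pi> {0..<t}" using permutes_inj_on[OF assms] .
  have "mset (map \<pi> [0..<t]) = image_mset \<pi> (mset_set {0..<t})" by (simp add: mset_upt)
  also have "\<dots> = mset_set (\<pi> ` {0..<t})" by (rule image_mset_mset_set[OF inj])
  also have "\<pi> ` {0..<t} = {0..<t}" by (rule permutes_image[OF assms])
  finally have "mset (map \<pi> [0..<t]) = mset [0..<t]" by (simp add: mset_upt)
  thus ?thesis by (simp add: set_permutations_of_list_impl permutations_of_multiset_def)
qed

lemma tr_pos:
  assumes t: "t \<in> {3,4,5,6}" and \<pi>: "\<pi> permutes {0..<t}" and d: "d \<ge> 100"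
  shows "trWQ d t \<pi> > 0"
proof -
  have cov: "cover_ok t" and ents: "list_all (ent_ok t) (cert t)" and rok: "reps_ok t"
    using comp_ok[OF t] by auto
  define p where "p = map \<pi> [0..<t]"
  have "p \<in> set (map fst (cert t))"
    using perm_list_mem[OF \<pi>] cov by (simp add: p_def cover_ok_def)
  then obtain s r where e: "(p, s, r) \<in> set (cert t)" by auto
  hence "ent_ok t (p, s, r)" using ents by (simp add: list_all_iff)
  hence io: "inv_ok t s" and rr: "r \<in> set (reps t)" and c: "\<forall>i<t. p!(s!i) = s!(r!i)"
    by (auto simp: ent_ok_def list_all_iff)
  have lr: "length r = t" and rlt: "\<forall>x\<in>set r. x < t" and pc: "poscert (Gp (Fp t r) (dead t r) t [])"
    using rok rr by (auto simp: reps_ok_def list_all_iff)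
  have ls: "length s = t" using io by (simp add: inv_ok_def)
  obtain \<sigma>p: "fl s permutes {0..<t}" and qinv: "\<forall>a. Qdiag d t (a \<circ> fl s) = Qdiag d t a"
    using inv_ok_sound[OF io t] by blast
  have rlt': "\<forall>i<t. r!i < t" using rlt lr by auto
  have comm: "\<forall>i<t. \<pi> (fl s i) = fl s (fl r i)"
  proof (intro allI impI)
    fix i assume i: "i < t"
    have si: "fl s i = s!i" using i ls by (simp add: fl_def)
    have "fl s i < t" using permutes_in_image[OF \<sigma>p, of i] i by simp
    hence "\<pi> (fl s i) = p!(s!i)" using si by (simp add: p_def)
    also have "\<dots> = s!(r!i)" using c i by simp
    also have "\<dots> = fl s (fl r i)" using i lr ls rlt' by (simp add: fl_def)
    finally show "\<pi> (fl s i) = fl s (fl r i)" .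
  qed
  have "trWQ d t \<pi> = trWQ d t (fl r)"
    by (rule trWQ_conj[OF \<sigma>p comm]) (use qinv in simp)
  also have "\<dots> = peval (Gp (Fp t r) (dead t r) t []) (real d)"
    by (rule trWQ_Gp[OF lr rlt' t])
  finally show ?thesis using poscert_pos[OF pc] d by simp
qed

theorem proposition14:
  fixes t :: nat
  assumes "t \<in> {3, 4, 5, 6}"
  shows "\<exists>d0::nat. \<forall>d\<ge>d0. \<forall>\<xi>. conj_class t \<xi> \<longrightarrow> (\<Sum>\<pi>\<in>\<xi>. trWQ d t \<pi>) > 0"
proof (intro exI[of _ 100] allI impI)
  fix d :: nat and \<xi> :: "(nat \<Rightarrow> nat) set"
  assume d: "d \<ge> 100" and cc: "conj_class t \<xi>"
  then obtain \<pi> where \<pi>: "\<pi> permutes {0..<t}"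
    and xi: "\<xi> = {\<sigma> \<circ> \<pi> \<circ> inv \<sigma> | \<sigma>. \<sigma> permutes {0..<t}}"
    by (auto simp: conj_class_def)
  have sub: "\<xi> \<subseteq> {q. q permutes {0..<t}}"
  proof
    fix q assume "q \<in> \<xi>"
    then obtain \<sigma> where \<sigma>: "\<sigma> permutes {0..<t}" and q: "q = \<sigma> \<circ> \<pi> \<circ> inv \<sigma>" using xi by auto
    have "\<sigma> \<circ> \<pi> \<circ> inv \<sigma> permutes {0..<t}"
      by (intro permutes_compose permutes_inv \<sigma> \<pi>)
    thus "q \<in> {q. q permutes {0..<t}}" using q by simp
  qed
  have fin: "finite \<xi>" by (rule finite_subset[OF sub finite_permutations]) simp
  have "id \<circ> \<pi> \<circ> inv id \<in> \<xi>" unfolding xi using permutes_id by blast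
  hence ne: "\<xi> \<noteq> {}" by blast
  show "(\<Sum>\<pi>\<in>\<xi>. trWQ d t \<pi>) > 0"
    by (rule sum_pos[OF fin ne]) (use sub tr_pos[OF assms _ d] in blast)
qed

end
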